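(* Let $\Lambda_2,\Lambda_3,\Lambda_4\in\mathbb C$ with $\Lambda_4\ne0$, and let $\mathcal V^{[2]}$ be the Virasoro Whittaker module generated by $|J\rangle$ with $L_n|J\rangle=\Lambda_n|J\rangle$ ($n=2,3,4$), $L_n|J\rangle=0$ ($n>4$). There exists a unique formal series $|\Psi\rangle=\sum_{k\ge0}\Lambda_5^k|\Psi_k\rangle$, $|\Psi_0\rangle=|J\rangle$, $|\Psi_k\rangle\in\mathcal V^{[2]}$ independent of $\Lambda_5$, satisfying $L_n|\Psi\rangle=\Lambda_n|\Psi\rangle$ ($n=3,4,5$), $L_n|\Psi\rangle=0$ ($n>5$), and the orthogonal gauge $\xi(|\Psi_k\rangle)=\delta_{k,0}$. For every $k\in\mathbb N$ its component $|\Psi_k\rangle$ belongs to $V_k^{(1)}$. If in addition $\Lambda_3=0$, then $|\Psi_k\rangle\in V_k^{(2)}\subset V_k^{(1)}$.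
   Context: Basis $v_\lambda=\mathbf L_{-\lambda}|J\rangle$, $\mathbf L_{-\lambda}=L_{-\lambda_1+2}\cdots L_{-\lambda_\ell+2}$ for partitions $\lambda=(\lambda_1\ge\dots\ge\lambda_\ell\ge1)$, $v_\emptyset=|J\rangle$; $\xi$ is the linear functional giving the coefficient of $|J\rangle$ in this basis. $|\lambda|=\sum\lambda_i$, $U_m=\operatorname{span}\{v_\lambda:|\lambda|\le m\}$. For $\delta\in\{1,2\}$ and $\lambda=(\cdots3^{n_3}2^{n_2}1^{n_1})$, $\deg_\delta v_\lambda=n_1+\delta n_2+\sum_{k>2}n_k(k-2)$ (i.e. $\deg_\delta L_{-k}=k$ for $k>0$, $\deg_\delta L_0=\delta$, $\deg_\delta L_1=1$). $V_k^{(\delta)}=\operatorname{span}\{v_\lambda\in U_{3k}:\deg_\delta v_\lambda\le k\}$. The relations on $|\Psi\rangle$ hold order by order in $\Lambda_5$. *)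

theory Defs
  imports Main "HOL-Analysis.Analysis"
begin

definition is_partition :: "nat list \<Rightarrow> bool" where
  "is_partition lam \<longleftrightarrow> sorted_wrt (\<ge>) lam \<and> (\<forall>i\<in>set lam. 1 \<le> i)"

definition vir_word :: "(int \<Rightarrow> 'v \<Rightarrow> 'v) \<Rightarrow> 'v \<Rightarrow> nat list \<Rightarrow> 'v" where
  "vir_word L J lam = foldr (\<lambda>i w. L (2 - int i) w) lam J"

text \<open>deg_delta: a part 1 (operator L_1) has degree 1, a part 2 (operator L_0) degree delta,
  a part k > 2 (operator L_{-(k-2)}) degree k - 2.\<close>
definition deg_part :: "nat \<Rightarrow> nat \<Rightarrow> nat" where
  "deg_part \<delta> i = (if i = 1 then 1 else if i = 2 then \<delta> else i - 2)"

definition deg_delta :: "nat \<Rightarrow> nat list \<Rightarrow> nat" where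
  "deg_delta \<delta> lam = sum_list (map (deg_part \<delta>) lam)"

definition U_space :: "(complex \<Rightarrow> 'v::ab_group_add \<Rightarrow> 'v) \<Rightarrow> (int \<Rightarrow> 'v \<Rightarrow> 'v) \<Rightarrow> 'v \<Rightarrow> nat \<Rightarrow> 'v set" where
  "U_space smult_v L J m = module.span smult_v {vir_word L J lam | lam. is_partition lam \<and> sum_list lam \<le> m}"

definition V_space :: "(complex \<Rightarrow> 'v::ab_group_add \<Rightarrow> 'v) \<Rightarrow> (int \<Rightarrow> 'v \<Rightarrow> 'v) \<Rightarrow> 'v \<Rightarrow> nat \<Rightarrow> nat \<Rightarrow> 'v set" where
  "V_space smult_v L J \<delta> k = module.span smult_v
     {vir_word L J lam | lam. is_partition lam \<and> vir_word L J lam \<in> U_space smult_v L J (3 * k)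
                              \<and> deg_delta \<delta> lam \<le> k}"

definition xi :: "(complex \<Rightarrow> 'v::ab_group_add \<Rightarrow> 'v) \<Rightarrow> (int \<Rightarrow> 'v \<Rightarrow> 'v) \<Rightarrow> 'v \<Rightarrow> 'v \<Rightarrow> complex" where
  "xi smult_v L J x = module.representation smult_v (vir_word L J ` {lam. is_partition lam}) x J"

definition virasoro_rep :: "(complex \<Rightarrow> 'v::ab_group_add \<Rightarrow> 'v) \<Rightarrow> complex \<Rightarrow> (int \<Rightarrow> 'v \<Rightarrow> 'v) \<Rightarrow> bool" where
  "virasoro_rep smult_v c L \<longleftrightarrow>
     vector_space smult_v \<and> (\<forall>n. Vector_Spaces.linear smult_v smult_v (L n)) \<and>
     (\<forall>m n w. L m (L n w) - L n (L m w) =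
        smult_v (of_int (m - n)) (L (m + n) w)
        + (if m + n = 0 then smult_v (c / 12 * of_int (m ^ 3 - m)) w else 0))"

text \<open>The Virasoro Whittaker module V^[2] of central charge c generated by J with
  L_n J = Lambda_n J (n = 2,3,4), L_n J = 0 (n > 4): a Virasoro representation in which the
  PBW vectors v_lambda (lambda ranging over partitions) form a basis (distinct, linearly
  independent, spanning).  Any such module is canonically isomorphic to the universal
  (induced) Whittaker module.\<close>
definition whittaker_module2 ::
  "(complex \<Rightarrow> 'v::ab_group_add \<Rightarrow> 'v) \<Rightarrow> complex \<Rightarrow> (int \<Rightarrow> 'v \<Rightarrow> 'v) \<Rightarrow> 'v
     \<Rightarrow> complex \<Rightarrow> complex \<Rightarrow> complex \<Rightarrow> bool" where
  "whittaker_module2 smult_v c L J \<Lambda>2 \<Lambda>3 \<Lambda>4 \<longleftrightarrow>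
     virasoro_rep smult_v c L \<and>
     L 2 J = smult_v \<Lambda>2 J \<and> L 3 J = smult_v \<Lambda>3 J \<and> L 4 J = smult_v \<Lambda>4 J \<and>
     (\<forall>n>4. L n J = 0) \<and>
     inj_on (vir_word L J) {lam. is_partition lam} \<and>
     \<not> module.dependent smult_v (vir_word L J ` {lam. is_partition lam}) \<and>
     module.span smult_v (vir_word L J ` {lam. is_partition lam}) = UNIV"

text \<open>The relations on the formal series Psi = sum_k Lambda_5^k Psi_k, order by order in Lambda_5:
  Psi_0 = J; L_3 Psi = Lambda_3 Psi, L_4 Psi = Lambda_4 Psi, L_5 Psi = Lambda_5 Psi,
  L_n Psi = 0 (n > 5); gauge xi(Psi_k) = delta_{k,0}.\<close>
definition psi_conditions ::
  "(complex \<Rightarrow> 'v::ab_group_add \<Rightarrow> 'v) \<Rightarrow> (int \<Rightarrow> 'v \<Rightarrow> 'v) \<Rightarrow> 'v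
     \<Rightarrow> complex \<Rightarrow> complex \<Rightarrow> (nat \<Rightarrow> 'v) \<Rightarrow> bool" where
  "psi_conditions smult_v L J \<Lambda>3 \<Lambda>4 \<Psi> \<longleftrightarrow>
     \<Psi> 0 = J \<and>
     (\<forall>k. L 3 (\<Psi> k) = smult_v \<Lambda>3 (\<Psi> k)) \<and>
     (\<forall>k. L 4 (\<Psi> k) = smult_v \<Lambda>4 (\<Psi> k)) \<and>
     L 5 (\<Psi> 0) = 0 \<and> (\<forall>k. L 5 (\<Psi> (Suc k)) = \<Psi> k) \<and>
     (\<forall>n>5. \<forall>k. L n (\<Psi> k) = 0) \<and>
     (\<forall>k. xi smult_v L J (\<Psi> k) = (if k = 0 then 1 else 0))"

end

theory Submission
  imports Defs
begin

fun ins :: "nat \<Rightarrow> nat list \<Rightarrow> nat list" where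
  "ins p [] = [p]"
| "ins p (q # qs) = (if q \<le> p then p # q # qs else q # ins p qs)"

definition Qp :: "(nat \<Rightarrow> int) \<Rightarrow> nat list \<Rightarrow> int" where
  "Qp \<psi> lam = sum_list (map \<psi> lam)"

lemma Qp_simps[simp]: "Qp \<psi> [] = 0" "Qp \<psi> (p # lam) = \<psi> p + Qp \<psi> lam"
  by (simp_all add: Qp_def)

lemma is_partition_Cons: "is_partition (q # qs) \<longleftrightarrow> 1 \<le> q \<and> (\<forall>x\<in>set qs. x \<le> q) \<and> is_partition qs"
  by (auto simp: is_partition_def)

lemma is_partition_Nil[simp]: "is_partition []"
  by (simp add: is_partition_def)

lemma set_ins[simp]: "set (ins p qs) = insert p (set qs)"
  by (induction qs) auto

lemma sum_ins[simp]: "sum_list (ins p qs) = p + sum_list qs"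
  by (induction qs) auto

lemma Qp_ins[simp]: "Qp \<psi> (ins p qs) = \<psi> p + Qp \<psi> qs"
  by (induction qs) auto

lemma is_partition_ins: "is_partition qs \<Longrightarrow> 1 \<le> p \<Longrightarrow> is_partition (ins p qs)"
  by (induction qs) (auto simp: is_partition_Cons)

lemma Qp_int: "Qp int lam = int (sum_list lam)"
  by (induction lam) auto

lemma Qp_deg: "Qp (\<lambda>p. int (deg_part d p)) lam = int (deg_delta d lam)"
  by (induction lam) (auto simp: deg_delta_def)

lemma ins_top: "\<forall>x\<in>set qs. x \<le> p \<Longrightarrow> ins p qs = p # qs"
  by (cases qs) auto

lemma part_remove1: "is_partition qs \<Longrightarrow> is_partition (remove1 m qs)"
proof (induction qs)
  case (Cons q qs)
  then show ?case by (auto simp: is_partition_Cons dest: subsetD[OF set_remove1_subset])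
qed simp

lemma cons_remove1: "is_partition (p # qs) \<Longrightarrow> p \<in> set qs \<Longrightarrow> p # remove1 p qs = qs"
proof (cases qs)
  case (Cons q qs')
  assume a: "is_partition (p # qs)" "p \<in> set qs"
  show ?thesis
  proof (cases "q = p")
    case False
    then have "q < p" using a Cons by (auto simp: is_partition_Cons)
    moreover have "\<forall>x\<in>set qs'. x \<le> q" using a Cons by (auto simp: is_partition_Cons)
    ultimately show ?thesis using a Cons False by auto
  qed (use Cons in simp)
qed simp

lemma partition_unique: "is_partition a \<Longrightarrow> is_partition b \<Longrightarrow> mset a = mset b \<Longrightarrow> a = b"
proof -
  assume a: "is_partition a" "is_partition b" "mset a = mset b"
  have sa: "sorted (rev a)" and sb: "sorted (rev b)"
    using a by (auto simp: is_partition_def sorted_wrt_rev)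
  have "sort (rev b) = rev a" by (rule properties_for_sort) (use a sa in auto)
  moreover have "sort (rev b) = rev b" by (rule properties_for_sort) (use sb in auto)
  ultimately show ?thesis by simp
qed

lemma length_le_sum: "is_partition qs \<Longrightarrow> length qs \<le> sum_list qs"
  by (induction qs) (auto simp: is_partition_Cons)

lemma finite_parts: "finite {lam. is_partition lam \<and> sum_list lam \<le> n}"
proof (rule finite_subset[OF _ finite_lists_length_le[of "{0..n}" n]])
  show "{lam. is_partition lam \<and> sum_list lam \<le> n} \<subseteq> {xs. set xs \<subseteq> {0..n} \<and> length xs \<le> n}"
  proof safe
    fix lam x assume "is_partition lam" "sum_list lam \<le> n" "x \<in> set lam"
    then show "x \<in> {0..n}" using member_le_sum_list[of x lam] by auto
  next
    fix lam assume "is_partition lam" "sum_list lam \<le> n"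
    then show "length lam \<le> n" using length_le_sum by fastforce
  qed
qed simp

lemma sum0_Nil: "is_partition qs \<Longrightarrow> sum_list qs = 0 \<Longrightarrow> qs = []"
  by (cases qs) (auto simp: is_partition_Cons)

definition wd :: "nat list \<Rightarrow> int list" where
  "wd mu = map (\<lambda>m. int m + 2) mu"

lemma wd_simps[simp]: "wd [] = []" "wd (m # mu) = (int m + 2) # wd mu"
  by (simp_all add: wd_def)

lemma wd_ge3: "is_partition mu \<Longrightarrow> n \<in> set (wd mu) \<Longrightarrow> n \<ge> 3"
  by (auto simp: wd_def is_partition_def)

locale WM =
  fixes sm :: "complex \<Rightarrow> 'v::ab_group_add \<Rightarrow> 'v"
    and c :: complex and L :: "int \<Rightarrow> 'v \<Rightarrow> 'v" and J :: 'v
    and \<Lambda>2 \<Lambda>3 \<Lambda>4 :: complex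
  assumes wm: "whittaker_module2 sm c L J \<Lambda>2 \<Lambda>3 \<Lambda>4"
    and L4nz: "\<Lambda>4 \<noteq> 0"
begin

sublocale vector_space sm
  using wm by (simp add: whittaker_module2_def virasoro_rep_def)

lemma Lhom: "module_hom sm sm (L n)"
  using wm by (simp add: whittaker_module2_def virasoro_rep_def module_hom_iff_linear)

lemma L_add: "L n (x + y) = L n x + L n y"
  using module_hom.add[OF Lhom] .
lemma L_scale: "L n (sm a x) = sm a (L n x)"
  using module_hom.scale[OF Lhom] .
lemma L_zero[simp]: "L n 0 = 0"
  using module_hom.zero[OF Lhom] .
lemma L_diff: "L n (x - y) = L n x - L n y"
  using module_hom.diff[OF Lhom] .

lemma comm: "L m (L n w) - L n (L m w) =
        sm (of_int (m - n)) (L (m + n) w)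
        + (if m + n = 0 then sm (c / 12 * of_int (m ^ 3 - m)) w else 0)"
  using wm by (simp add: whittaker_module2_def virasoro_rep_def)

lemma LJ2: "L 2 J = sm \<Lambda>2 J" and LJ3: "L 3 J = sm \<Lambda>3 J" and LJ4: "L 4 J = sm \<Lambda>4 J"
  and LJ5: "n > 4 \<Longrightarrow> L n J = 0"
  using wm by (simp_all add: whittaker_module2_def)

abbreviation v :: "nat list \<Rightarrow> 'v" where "v \<equiv> vir_word L J"

lemma v_Nil[simp]: "v [] = J" and v_Cons[simp]: "v (p # lam) = L (2 - int p) (v lam)"
  by (simp_all add: vir_word_def)

definition Part :: "nat list set" where "Part = {lam. is_partition lam}"

lemma inj_v: "inj_on v Part"
  using wm by (simp add: whittaker_module2_def Part_def)
lemma indep: "independent (v ` Part)"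
  using wm by (simp add: whittaker_module2_def Part_def)
lemma spanB: "span (v ` Part) = UNIV"
  using wm by (simp add: whittaker_module2_def Part_def)

lemma span_map:
  assumes add: "\<And>x y. f (x + y) = f x + f y" and sc: "\<And>a x. f (sm a x) = sm a (f x)"
    and x: "x \<in> span A" and h: "\<And>a. a \<in> A \<Longrightarrow> f a \<in> span B"
  shows "f x \<in> span B"
  using x
proof (induction rule: span_induct_alt)
  case base
  have "f 0 = f 0 + f 0" using add[of 0 0] by simp
  then have "f 0 = 0" by simp
  then show ?case by (simp add: span_zero)
next
  case (step c x y)
  then show ?case by (simp add: add sc h span_add span_scale)
qed

lemma L_span: "x \<in> span A \<Longrightarrow> (\<And>a. a \<in> A \<Longrightarrow> L n a \<in> span B) \<Longrightarrow> L n x \<in> span B"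
  by (rule span_map[where f="L n"]) (auto simp: L_add L_scale)

lemma comm_cre:
  assumes "1 \<le> p" "p < q"
  shows "L (2 - int p) (L (2 - int q) y) = L (2 - int q) (L (2 - int p) y)
          + sm (of_int (int q - int p)) (L (2 - int (p + q - 2)) y)"
proof -
  have e: "2 - int p + (2 - int q) = 2 - int (p + q - 2)" using assms by simp
  have "(2 - int p + (2 - int q) = 0) \<Longrightarrow> (2 - int p) ^ 3 - (2 - int p) = 0"
  proof -
    assume "2 - int p + (2 - int q) = 0"
    then have "p = 1" using assms by linarith
    then show ?thesis by simp
  qed
  then have "(if 2 - int p + (2 - int q) = 0 then sm (c / 12 * of_int ((2 - int p) ^ 3 - (2 - int p))) y else 0) = 0"
    by auto
  with comm[of "2 - int p" "2 - int q" y] e show ?thesis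
    by (simp add: algebra_simps)
qed

definition SB :: "(nat \<Rightarrow> int) \<Rightarrow> int \<Rightarrow> int \<Rightarrow> 'v set" where
  "SB \<psi> s q = span (v ` {\<rho> \<in> Part. int (sum_list \<rho>) \<le> s \<and> Qp \<psi> \<rho> \<le> q})"

lemma SB_mono: "s \<le> s' \<Longrightarrow> q \<le> q' \<Longrightarrow> SB \<psi> s q \<subseteq> SB \<psi> s' q'"
  unfolding SB_def by (rule span_mono) auto

lemma v_in_SB: "\<rho> \<in> Part \<Longrightarrow> int (sum_list \<rho>) \<le> s \<Longrightarrow> Qp \<psi> \<rho> \<le> q \<Longrightarrow> v \<rho> \<in> SB \<psi> s q"
  unfolding SB_def by (rule span_base) auto

lemma SB_add: "x \<in> SB \<psi> s q \<Longrightarrow> y \<in> SB \<psi> s q \<Longrightarrow> x + y \<in> SB \<psi> s q"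
  and SB_diff: "x \<in> SB \<psi> s q \<Longrightarrow> y \<in> SB \<psi> s q \<Longrightarrow> x - y \<in> SB \<psi> s q"
  and SB_scale: "x \<in> SB \<psi> s q \<Longrightarrow> sm a x \<in> SB \<psi> s q"
  and SB_zero: "0 \<in> SB \<psi> s q"
  by (simp_all add: SB_def span_add span_diff span_scale span_zero)

lemma SB_map:
  assumes add: "\<And>x y. f (x + y) = f x + f y" and sc: "\<And>a x. f (sm a x) = sm a (f x)"
    and x: "x \<in> SB \<psi> s q"
    and h: "\<And>\<rho>. \<rho> \<in> Part \<Longrightarrow> int (sum_list \<rho>) \<le> s \<Longrightarrow> Qp \<psi> \<rho> \<le> q \<Longrightarrow> f (v \<rho>) \<in> SB \<psi>' s' q'"
  shows "f x \<in> SB \<psi>' s' q'"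
  using x unfolding SB_def
  by (rule span_map[OF add sc]) (use h in \<open>auto simp: SB_def\<close>)

lemma L_SB:
  "x \<in> SB \<psi> s q \<Longrightarrow> (\<And>\<rho>. \<rho> \<in> Part \<Longrightarrow> int (sum_list \<rho>) \<le> s \<Longrightarrow> Qp \<psi> \<rho> \<le> q \<Longrightarrow> L n (v \<rho>) \<in> SB \<psi>' s' q')
   \<Longrightarrow> L n x \<in> SB \<psi>' s' q'"
  by (rule SB_map[where f="L n"]) (auto simp: L_add L_scale)

lemma CL:
  assumes A1: "\<And>p q. 1 \<le> p \<Longrightarrow> p < q \<Longrightarrow> \<psi> (p + q - 2) \<le> \<psi> p + \<psi> q"
  shows "1 \<le> p \<Longrightarrow> \<mu> \<in> Part \<Longrightarrow>
    L (2 - int p) (v \<mu>) - v (ins p \<mu>) \<in> SB \<psi> (int (sum_list \<mu>) + int p - 2) (Qp \<psi> \<mu> + \<psi> p)"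
proof (induction "p + sum_list \<mu>" arbitrary: p \<mu> rule: less_induct)
  case less
  show ?case
  proof (cases \<mu>)
    case Nil
    then show ?thesis by (simp add: SB_def span_zero)
  next
    case (Cons q \<mu>')
    have q: "1 \<le> q" "\<forall>x\<in>set \<mu>'. x \<le> q" "\<mu>' \<in> Part"
      using less.prems Cons by (auto simp: Part_def is_partition_Cons)
    show ?thesis
    proof (cases "q \<le> p")
      case True
      then show ?thesis using Cons by (simp add: SB_def span_zero)
    next
      case False
      define y where "y = v \<mu>'"
      have IH1: "L (2 - int p) y - v (ins p \<mu>') \<in> SB \<psi> (int (sum_list \<mu>') + int p - 2) (Qp \<psi> \<mu>' + \<psi> p)"
        unfolding y_def using less.hyps[of p \<mu>'] less.prems q Cons by simp
      have IH3: "L (2 - int (p + q - 2)) y - v (ins (p + q - 2) \<mu>') \<in> SB \<psi> (int (sum_list \<mu>') + int (p + q - 2) - 2) (Qp \<psi> \<mu>' + \<psi> (p + q - 2))"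
        unfolding y_def using less.hyps[of "p + q - 2" \<mu>'] less.prems q Cons False by simp
      have part2: "L (2 - int q) (L (2 - int p) y - v (ins p \<mu>')) \<in> SB \<psi> (int (sum_list \<mu>) + int p - 2) (Qp \<psi> \<mu> + \<psi> p)"
      proof (rule L_SB[OF IH1])
        fix \<rho> assume \<rho>: "\<rho> \<in> Part" "int (sum_list \<rho>) \<le> int (sum_list \<mu>') + int p - 2" "Qp \<psi> \<rho> \<le> Qp \<psi> \<mu>' + \<psi> p"
        have lt: "q + sum_list \<rho> < p + sum_list \<mu>" using \<rho> Cons False less.prems by auto
        have IH2: "L (2 - int q) (v \<rho>) - v (ins q \<rho>) \<in> SB \<psi> (int (sum_list \<rho>) + int q - 2) (Qp \<psi> \<rho> + \<psi> q)"
          using less.hyps[OF lt] q \<rho> by simp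
        have s1: "SB \<psi> (int (sum_list \<rho>) + int q - 2) (Qp \<psi> \<rho> + \<psi> q) \<subseteq> SB \<psi> (int (sum_list \<mu>) + int p - 2) (Qp \<psi> \<mu> + \<psi> p)"
          by (rule SB_mono) (use Cons \<rho> False less.prems in auto)
        have s2: "v (ins q \<rho>) \<in> SB \<psi> (int (sum_list \<mu>) + int p - 2) (Qp \<psi> \<mu> + \<psi> p)"
          by (rule v_in_SB) (use Cons \<rho> q False less.prems in \<open>auto simp: Part_def intro: is_partition_ins\<close>)
        have "L (2 - int q) (v \<rho>) = (L (2 - int q) (v \<rho>) - v (ins q \<rho>)) + v (ins q \<rho>)"
          by simp
        then show "L (2 - int q) (v \<rho>) \<in> SB \<psi> (int (sum_list \<mu>) + int p - 2) (Qp \<psi> \<mu> + \<psi> p)"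
          using SB_add[OF subsetD[OF s1 IH2] s2] by simp
      qed
      have part3: "sm (of_int (int q - int p)) (L (2 - int (p + q - 2)) y) \<in> SB \<psi> (int (sum_list \<mu>) + int p - 2) (Qp \<psi> \<mu> + \<psi> p)"
      proof -
        have s1: "SB \<psi> (int (sum_list \<mu>') + int (p + q - 2) - 2) (Qp \<psi> \<mu>' + \<psi> (p + q - 2)) \<subseteq> SB \<psi> (int (sum_list \<mu>) + int p - 2) (Qp \<psi> \<mu> + \<psi> p)"
          by (rule SB_mono) (use Cons False less.prems A1[of p q] in auto)
        have s2: "v (ins (p + q - 2) \<mu>') \<in> SB \<psi> (int (sum_list \<mu>) + int p - 2) (Qp \<psi> \<mu> + \<psi> p)"
          by (rule v_in_SB) (use Cons q False less.prems A1[of p q] in \<open>auto simp: Part_def intro: is_partition_ins\<close>)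
        have "L (2 - int (p + q - 2)) y = (L (2 - int (p + q - 2)) y - v (ins (p + q - 2) \<mu>')) + v (ins (p + q - 2) \<mu>')"
          by simp
        then have "L (2 - int (p + q - 2)) y \<in> SB \<psi> (int (sum_list \<mu>) + int p - 2) (Qp \<psi> \<mu> + \<psi> p)"
          using SB_add[OF subsetD[OF s1 IH3] s2] by simp
        then show ?thesis by (simp add: SB_def span_scale)
      qed
      have eq: "L (2 - int p) (v \<mu>) - v (ins p \<mu>) =
          L (2 - int q) (L (2 - int p) y - v (ins p \<mu>')) + sm (of_int (int q - int p)) (L (2 - int (p + q - 2)) y)"
        using Cons False comm_cre[of p q y] less.prems by (simp add: y_def L_diff)
      show ?thesis unfolding eq using part2 part3 by (simp add: SB_def span_add)
    qed
  qed
qed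


lemma CL':
  assumes A1: "\<And>p q. 1 \<le> p \<Longrightarrow> p < q \<Longrightarrow> \<psi> (p + q - 2) \<le> \<psi> p + \<psi> q"
  shows "1 \<le> p \<Longrightarrow> \<mu> \<in> Part \<Longrightarrow> L (2 - int p) (v \<mu>) \<in> SB \<psi> (int (sum_list \<mu>) + int p) (Qp \<psi> \<mu> + \<psi> p)"
proof -
  assume p: "1 \<le> p" and mu: "\<mu> \<in> Part"
  have a: "L (2 - int p) (v \<mu>) - v (ins p \<mu>) \<in> SB \<psi> (int (sum_list \<mu>) + int p) (Qp \<psi> \<mu> + \<psi> p)"
    using CL[OF A1 p mu] SB_mono[of "int (sum_list \<mu>) + int p - 2" "int (sum_list \<mu>) + int p"] by auto
  have b: "v (ins p \<mu>) \<in> SB \<psi> (int (sum_list \<mu>) + int p) (Qp \<psi> \<mu> + \<psi> p)"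
    by (rule v_in_SB) (use p mu in \<open>auto simp: Part_def intro: is_partition_ins\<close>)
  show ?thesis using SB_add[OF a b] by simp
qed

definition FQ :: "(nat \<Rightarrow> int) \<Rightarrow> int \<Rightarrow> 'v set" where
  "FQ \<psi> q = span (v ` {\<rho> \<in> Part. Qp \<psi> \<rho> \<le> q})"

lemma FQ_add: "x \<in> FQ \<psi> q \<Longrightarrow> y \<in> FQ \<psi> q \<Longrightarrow> x + y \<in> FQ \<psi> q"
  and FQ_diff: "x \<in> FQ \<psi> q \<Longrightarrow> y \<in> FQ \<psi> q \<Longrightarrow> x - y \<in> FQ \<psi> q"
  and FQ_scale: "x \<in> FQ \<psi> q \<Longrightarrow> sm a x \<in> FQ \<psi> q"
  and FQ_zero: "0 \<in> FQ \<psi> q"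
  by (simp_all add: FQ_def span_add span_diff span_scale span_zero)

lemma FQ_mono: "q \<le> q' \<Longrightarrow> x \<in> FQ \<psi> q \<Longrightarrow> x \<in> FQ \<psi> q'"
proof -
  assume a: "q \<le> q'" "x \<in> FQ \<psi> q"
  have "v ` {\<rho> \<in> Part. Qp \<psi> \<rho> \<le> q} \<subseteq> v ` {\<rho> \<in> Part. Qp \<psi> \<rho> \<le> q'}" using a by auto
  then show ?thesis using a(2) span_mono unfolding FQ_def by blast
qed

lemma v_in_FQ: "\<rho> \<in> Part \<Longrightarrow> Qp \<psi> \<rho> \<le> q \<Longrightarrow> v \<rho> \<in> FQ \<psi> q"
  unfolding FQ_def by (rule span_base) auto

lemma SB_FQ: "x \<in> SB \<psi> s q \<Longrightarrow> x \<in> FQ \<psi> q"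
  unfolding SB_def FQ_def using span_mono[of "v ` {\<rho> \<in> Part. int (sum_list \<rho>) \<le> s \<and> Qp \<psi> \<rho> \<le> q}" "v ` {\<rho> \<in> Part. Qp \<psi> \<rho> \<le> q}"] by auto

lemma FQ_map:
  assumes add: "\<And>x y. f (x + y) = f x + f y" and sc: "\<And>a x. f (sm a x) = sm a (f x)"
    and x: "x \<in> FQ \<psi> q"
    and h: "\<And>\<rho>. \<rho> \<in> Part \<Longrightarrow> Qp \<psi> \<rho> \<le> q \<Longrightarrow> f (v \<rho>) \<in> FQ \<psi>' q'"
  shows "f x \<in> FQ \<psi>' q'"
  using x unfolding FQ_def
  by (rule span_map[OF add sc]) (use h in \<open>auto simp: FQ_def\<close>)

definition chi0 :: "int \<Rightarrow> complex" where
  "chi0 n = (if n = 3 then \<Lambda>3 else if n = 4 then \<Lambda>4 else 0)"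

definition T :: "int \<Rightarrow> 'v \<Rightarrow> 'v" where
  "T n x = L n x - sm (chi0 n) x"

lemma T_add: "T n (x + y) = T n x + T n y"
  by (simp add: T_def L_add scale_right_distrib)
lemma T_scale: "T n (sm a x) = sm a (T n x)"
  by (simp add: T_def L_scale scale_right_diff_distrib scale_left_commute)
lemma T_zero[simp]: "T n 0 = 0"
  by (simp add: T_def)
lemma T_diff: "T n (x - y) = T n x - T n y"
  by (simp add: T_def L_diff scale_right_diff_distrib)

lemma TJ: "n \<ge> 3 \<Longrightarrow> T n J = 0"
  by (auto simp: T_def chi0_def LJ3 LJ4 LJ5)

lemma L_large: "n \<ge> 5 \<Longrightarrow> L n x = T n x"
  by (simp add: T_def chi0_def)

lemma commL: "L x (L a y) = L a (L x y) + sm (of_int (x - a)) (L (x + a) y)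
     + (if x + a = 0 then sm (c / 12 * of_int (x ^ 3 - x)) y else 0)"
  using comm[of x a y] by (simp add: algebra_simps)

lemma commT: "T x (L a y) = L a (T x y) + sm (of_int (x - a)) (L (x + a) y)
     + (if x + a = 0 then sm (c / 12 * of_int (x ^ 3 - x)) y else 0)"
  using commL[of x a y] by (simp add: T_def L_diff L_scale algebra_simps)

definition Bcond :: "(nat \<Rightarrow> int) \<Rightarrow> (int \<Rightarrow> int) \<Rightarrow> int \<Rightarrow> int \<Rightarrow> bool" where
  "Bcond \<psi> \<phi>P x f \<longleftrightarrow> (\<forall>p\<ge>1. (x + 2 - int p \<ge> 2 \<longrightarrow> \<phi>P (x + 2 - int p) \<le> f + \<psi> p)
      \<and> (x + 2 - int p \<le> 1 \<longrightarrow> \<psi> (nat (int p - x)) \<le> f + \<psi> p)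
      \<and> (x + 2 - int p = 0 \<longrightarrow> 0 \<le> f + \<psi> p))"

lemma A10: "1 \<le> p \<Longrightarrow> p < q \<Longrightarrow> int (p + q - 2) \<le> int p + int q" by auto

lemma A1d: "d \<le> 2 \<Longrightarrow> 1 \<le> p \<Longrightarrow> p < q \<Longrightarrow> int (deg_part d (p + q - 2)) \<le> int (deg_part d p) + int (deg_part d q)"
  unfolding deg_part_def by auto

lemma B0T: "x \<ge> 3 \<Longrightarrow> Bcond int (\<lambda>x. if x = 2 then 0 else 4 - x) x (- int (nat (x - 2)))"
  unfolding Bcond_def by auto
lemma B0P: "x \<ge> 2 \<Longrightarrow> Bcond int (\<lambda>x. if x = 2 then 0 else 4 - x) x ((\<lambda>x. if x = 2 then 0 else 4 - x) x)"
  unfolding Bcond_def by auto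
lemma B1T: "x \<ge> 3 \<Longrightarrow> Bcond (\<lambda>p. int (deg_part 1 p)) (\<lambda>x. if x \<le> 4 then 0 else 4 - x) x (- int (deg_part 1 (nat (x - 2))))"
  unfolding Bcond_def deg_part_def by auto
lemma B1P: "x \<ge> 2 \<Longrightarrow> Bcond (\<lambda>p. int (deg_part 1 p)) (\<lambda>x. if x \<le> 4 then 0 else 4 - x) x ((\<lambda>x. if x \<le> 4 then 0 else 4 - x) x)"
  unfolding Bcond_def deg_part_def by auto
lemma B2T: "x \<ge> 3 \<Longrightarrow> Bcond (\<lambda>p. int (deg_part 2 p)) (\<lambda>x. if x = 3 then -1 else if x \<le> 4 then 0 else 4 - x) x (- int (deg_part 2 (nat (x - 2))))"
  unfolding Bcond_def deg_part_def by auto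
lemma B2P: "x \<ge> 2 \<Longrightarrow> Bcond (\<lambda>p. int (deg_part 2 p)) (\<lambda>x. if x = 3 then -1 else if x \<le> 4 then 0 else 4 - x) x ((\<lambda>x. if x = 3 then -1 else if x \<le> 4 then 0 else 4 - x) x)"
  unfolding Bcond_def deg_part_def by auto

lemma GL_step:
  assumes A1: "\<And>p q. 1 \<le> p \<Longrightarrow> p < q \<Longrightarrow> \<psi> (p + q - 2) \<le> \<psi> p + \<psi> q"
    and IHL: "\<And>b. b \<ge> 2 \<Longrightarrow> L b (v \<kappa>') \<in> FQ \<psi> (Qp \<psi> \<kappa>' + \<phi>P b)"
    and Xeq: "X (v (p # \<kappa>')) = L (2 - int p) (X (v \<kappa>')) + sm (of_int (x - (2 - int p))) (L (x + (2 - int p)) (v \<kappa>'))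
     + (if x + (2 - int p) = 0 then sm (c / 12 * of_int (x ^ 3 - x)) (v \<kappa>') else 0)"
    and XIH: "X (v \<kappa>') \<in> FQ \<psi> (Qp \<psi> \<kappa>' + f)"
    and B: "Bcond \<psi> \<phi>P x f" and p: "1 \<le> p" and k: "\<kappa>' \<in> Part"
  shows "X (v (p # \<kappa>')) \<in> FQ \<psi> (Qp \<psi> \<kappa>' + \<psi> p + f)"
proof -
  have t1: "L (2 - int p) (X (v \<kappa>')) \<in> FQ \<psi> (Qp \<psi> \<kappa>' + \<psi> p + f)"
  proof (rule FQ_map[OF L_add L_scale XIH])
    fix \<rho> assume "\<rho> \<in> Part" "Qp \<psi> \<rho> \<le> Qp \<psi> \<kappa>' + f"
    then show "L (2 - int p) (v \<rho>) \<in> FQ \<psi> (Qp \<psi> \<kappa>' + \<psi> p + f)"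
      using SB_FQ[OF CL'[OF A1 p]] FQ_mono[of "Qp \<psi> \<rho> + \<psi> p"] by auto
  qed
  have t2: "L (x + (2 - int p)) (v \<kappa>') \<in> FQ \<psi> (Qp \<psi> \<kappa>' + \<psi> p + f)"
  proof (cases "x + 2 - int p \<ge> 2")
    case True
    have e: "x + (2 - int p) = x + 2 - int p" by simp
    have "\<phi>P (x + 2 - int p) \<le> f + \<psi> p" using B p True unfolding Bcond_def by blast
    then have le: "Qp \<psi> \<kappa>' + \<phi>P (x + (2 - int p)) \<le> Qp \<psi> \<kappa>' + \<psi> p + f" unfolding e by simp
    have "L (x + (2 - int p)) (v \<kappa>') \<in> FQ \<psi> (Qp \<psi> \<kappa>' + \<phi>P (x + (2 - int p)))"
      using IHL[of "x + (2 - int p)"] True by simp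
    then show ?thesis using FQ_mono[OF le] by blast
  next
    case False
    define p' where "p' = nat (int p - x)"
    have p': "1 \<le> p'" "x + (2 - int p) = 2 - int p'" using False by (auto simp: p'_def)
    have F: "x + 2 - int p \<le> 1" using False by simp
    have "\<psi> p' \<le> f + \<psi> p" using B p F unfolding Bcond_def p'_def by blast
    then have le: "Qp \<psi> \<kappa>' + \<psi> p' \<le> Qp \<psi> \<kappa>' + \<psi> p + f" by simp
    have "L (2 - int p') (v \<kappa>') \<in> FQ \<psi> (Qp \<psi> \<kappa>' + \<psi> p')"
      using SB_FQ[OF CL'[OF A1 p'(1) k]] by blast
    then show ?thesis unfolding p'(2) using FQ_mono[OF le] by blast
  qed
  have t3: "(if x + (2 - int p) = 0 then sm (c / 12 * of_int (x ^ 3 - x)) (v \<kappa>') else 0) \<in> FQ \<psi> (Qp \<psi> \<kappa>' + \<psi> p + f)"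
  proof (cases "x + (2 - int p) = 0")
    case True
    then have "x + 2 - int p = 0" by simp
    then have "0 \<le> f + \<psi> p" using B p unfolding Bcond_def by blast
    then have "v \<kappa>' \<in> FQ \<psi> (Qp \<psi> \<kappa>' + \<psi> p + f)" using v_in_FQ[OF k] by auto
    then show ?thesis using True by (simp add: FQ_scale)
  qed (simp add: FQ_zero)
  show ?thesis unfolding Xeq by (intro FQ_add FQ_scale t1 t2 t3)
qed

lemma commTv: "T x (v (p # \<kappa>)) = L (2 - int p) (T x (v \<kappa>)) + sm (of_int (x - (2 - int p))) (L (x + (2 - int p)) (v \<kappa>))
     + (if x + (2 - int p) = 0 then sm (c / 12 * of_int (x ^ 3 - x)) (v \<kappa>) else 0)"
  unfolding v_Cons by (rule commT)

lemma commLv: "L x (v (p # \<kappa>)) = L (2 - int p) (L x (v \<kappa>)) + sm (of_int (x - (2 - int p))) (L (x + (2 - int p)) (v \<kappa>))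
     + (if x + (2 - int p) = 0 then sm (c / 12 * of_int (x ^ 3 - x)) (v \<kappa>) else 0)"
  unfolding v_Cons by (rule commL)

lemma GL:
  assumes A1: "\<And>p q. 1 \<le> p \<Longrightarrow> p < q \<Longrightarrow> \<psi> (p + q - 2) \<le> \<psi> p + \<psi> q"
    and BT: "\<And>x. x \<ge> 3 \<Longrightarrow> Bcond \<psi> \<phi>P x (\<phi>T x)"
    and BP: "\<And>x. x \<ge> 2 \<Longrightarrow> Bcond \<psi> \<phi>P x (\<phi>P x)"
    and A4: "\<Lambda>2 \<noteq> 0 \<Longrightarrow> 0 \<le> \<phi>P 2" "\<Lambda>3 \<noteq> 0 \<Longrightarrow> 0 \<le> \<phi>P 3" "\<Lambda>4 \<noteq> 0 \<Longrightarrow> 0 \<le> \<phi>P 4"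
  shows "\<kappa> \<in> Part \<Longrightarrow> (\<forall>x\<ge>3. T x (v \<kappa>) \<in> FQ \<psi> (Qp \<psi> \<kappa> + \<phi>T x)) \<and> (\<forall>x\<ge>2. L x (v \<kappa>) \<in> FQ \<psi> (Qp \<psi> \<kappa> + \<phi>P x))"
proof (induction \<kappa>)
  case Nil
  have J: "0 \<le> q \<Longrightarrow> J \<in> FQ \<psi> q" for q using v_in_FQ[of "[]" \<psi> q] by (simp add: Part_def)
  have J': "(a \<noteq> 0 \<Longrightarrow> 0 \<le> q) \<Longrightarrow> sm a J \<in> FQ \<psi> q" for a q
    by (cases "a = 0") (auto simp: FQ_zero intro: FQ_scale J)
  have "L x J \<in> FQ \<psi> (\<phi>P x)" if "x \<ge> 2" for x
  proof -
    have "x = 2 \<or> x = 3 \<or> x = 4 \<or> x \<ge> 5" using that by linarith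
    then show ?thesis
      by (elim disjE) (use A4 J' in \<open>auto simp: LJ2 LJ3 LJ4 LJ5 FQ_scale FQ_zero\<close>)
  qed
  then show ?case by (simp add: TJ FQ_zero)
next
  case (Cons p \<kappa>')
  have k: "\<kappa>' \<in> Part" and p: "1 \<le> p" using Cons.prems by (auto simp: Part_def is_partition_Cons)
  note IH = Cons.IH[OF k]
  have IHT: "\<And>x. x \<ge> 3 \<Longrightarrow> T x (v \<kappa>') \<in> FQ \<psi> (Qp \<psi> \<kappa>' + \<phi>T x)" using IH by blast
  have IHL: "\<And>x. x \<ge> 2 \<Longrightarrow> L x (v \<kappa>') \<in> FQ \<psi> (Qp \<psi> \<kappa>' + \<phi>P x)" using IH by blast
  have "T x (v (p # \<kappa>')) \<in> FQ \<psi> (Qp \<psi> \<kappa>' + \<psi> p + \<phi>T x)" if "x \<ge> 3" for x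
    using A1 IHL by (rule GL_step[where X="T x", OF _ _ commTv IHT[OF that] BT[OF that] p k])
  moreover have "L x (v (p # \<kappa>')) \<in> FQ \<psi> (Qp \<psi> \<kappa>' + \<psi> p + \<phi>P x)" if "x \<ge> 2" for x
    using A1 IHL by (rule GL_step[where X="L x", OF _ _ commLv IHL[OF that] BP[OF that] p k])
  ultimately show ?case by (simp add: add.commute add.left_commute)
qed


definition Tw :: "int list \<Rightarrow> 'v \<Rightarrow> 'v" where
  "Tw w x = fold T w x"

lemma Tw_Nil[simp]: "Tw [] x = x" and Tw_Cons[simp]: "Tw (n # w) x = Tw w (T n x)"
  by (simp_all add: Tw_def)

lemma Tw_append: "Tw (u @ w) x = Tw w (Tw u x)"
  by (simp add: Tw_def)

lemma Tw_add: "Tw w (x + y) = Tw w x + Tw w y"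
  by (induction w arbitrary: x y) (auto simp: T_add)
lemma Tw_scale: "Tw w (sm a x) = sm a (Tw w x)"
  by (induction w arbitrary: x) (auto simp: T_scale)
lemma Tw_zero[simp]: "Tw w 0 = 0"
  by (induction w) auto
lemma Tw_diff: "Tw w (x - y) = Tw w x - Tw w y"
  by (induction w arbitrary: x y) (auto simp: T_diff)

definition xi' :: "'v \<Rightarrow> complex" where
  "xi' x = representation (v ` Part) x J"

lemma xi_eq: "xi sm L J x = xi' x"
  by (simp add: xi_def xi'_def Part_def)

lemma xi'_add: "xi' (x + y) = xi' x + xi' y"
  using representation_add[OF indep, of y x] spanB by (simp add: xi'_def)
lemma xi'_scale: "xi' (sm a x) = a * xi' x"
  using representation_scale[OF indep, of x a] spanB by (simp add: xi'_def)
lemma xi'_zero[simp]: "xi' 0 = 0"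
  using xi'_scale[of 0 0] by simp
lemma xi'_diff: "xi' (x - y) = xi' x - xi' y"
  using xi'_add[of "x - y" y] by simp

lemma xi'_v: "\<rho> \<in> Part \<Longrightarrow> xi' (v \<rho>) = (if \<rho> = [] then 1 else 0)"
proof -
  assume r: "\<rho> \<in> Part"
  have "xi' (v \<rho>) = (if J = v \<rho> then 1 else 0)"
    unfolding xi'_def using representation_basis[OF indep, of "v \<rho>"] r by simp
  moreover have "J = v \<rho> \<longleftrightarrow> \<rho> = []"
    using inj_onD[OF inj_v, of "[]" \<rho>] r by (auto simp: Part_def)
  ultimately show ?thesis by simp
qed

lemma xi'_J: "xi' J = 1"
  using xi'_v[of "[]"] by (simp add: Part_def)

lemma xi'_FQ: "x \<in> FQ \<psi> q \<Longrightarrow> q < 0 \<Longrightarrow> xi' x = 0"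
  unfolding FQ_def
proof (induction x rule: span_induct_alt)
  case (step a x y)
  then obtain \<rho> where "x = v \<rho>" "\<rho> \<in> Part" "Qp \<psi> \<rho> \<le> q" by auto
  then have "xi' x = 0" using step xi'_v by auto
  then show ?case using step by (simp add: xi'_add xi'_scale)
qed simp

lemma Tw_FQ:
  assumes GT: "\<And>\<kappa> x. \<kappa> \<in> Part \<Longrightarrow> x \<ge> 3 \<Longrightarrow> T x (v \<kappa>) \<in> FQ \<psi> (Qp \<psi> \<kappa> + \<phi>T x)"
  shows "\<forall>n\<in>set w. n \<ge> 3 \<Longrightarrow> x \<in> FQ \<psi> q \<Longrightarrow> Tw w x \<in> FQ \<psi> (q + sum_list (map \<phi>T w))"
proof (induction w arbitrary: q x)
  case (Cons n w)
  have "T n x \<in> FQ \<psi> (q + \<phi>T n)"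
  proof (rule FQ_map[OF T_add T_scale Cons.prems(2)])
    fix \<rho> assume "\<rho> \<in> Part" "Qp \<psi> \<rho> \<le> q"
    then show "T n (v \<rho>) \<in> FQ \<psi> (q + \<phi>T n)"
      using GT[of \<rho> n] Cons.prems(1) FQ_mono[of "Qp \<psi> \<rho> + \<phi>T n" "q + \<phi>T n"] by auto
  qed
  then show ?case using Cons.IH[where q="q + \<phi>T n" and x="T n x"] Cons.prems by (simp add: add.assoc)
qed simp

lemma pot_bound:
  assumes A1: "\<And>p q. 1 \<le> p \<Longrightarrow> p < q \<Longrightarrow> \<psi> (p + q - 2) \<le> \<psi> p + \<psi> q"
    and BT: "\<And>x. x \<ge> 3 \<Longrightarrow> Bcond \<psi> \<phi>P x (- \<psi> (nat (x - 2)))"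
    and BP: "\<And>x. x \<ge> 2 \<Longrightarrow> Bcond \<psi> \<phi>P x (\<phi>P x)"
    and A4: "\<Lambda>2 \<noteq> 0 \<Longrightarrow> 0 \<le> \<phi>P 2" "\<Lambda>3 \<noteq> 0 \<Longrightarrow> 0 \<le> \<phi>P 3" "\<Lambda>4 \<noteq> 0 \<Longrightarrow> 0 \<le> \<phi>P 4"
    and mu: "\<mu> \<in> Part" and x: "x \<in> FQ \<psi> q"
  shows "Tw (wd \<mu>) x \<in> FQ \<psi> (q - Qp \<psi> \<mu>)"
proof -
  have GT: "\<And>\<kappa> x. \<kappa> \<in> Part \<Longrightarrow> x \<ge> 3 \<Longrightarrow> T x (v \<kappa>) \<in> FQ \<psi> (Qp \<psi> \<kappa> + (- \<psi> (nat (x - 2))))"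
    using GL[OF A1 BT BP A4] by blast
  have "sum_list (map (\<lambda>x. - \<psi> (nat (x - 2))) (wd \<mu>)) = - Qp \<psi> \<mu>"
    by (induction \<mu>) auto
  then show ?thesis using Tw_FQ[OF GT, of "wd \<mu>" x q] wd_ge3[of \<mu>] mu x by (auto simp: Part_def)
qed

abbreviation phi0P :: "int \<Rightarrow> int" where "phi0P \<equiv> (\<lambda>x. if x = 2 then 0 else 4 - x)"

lemma size_GL: "\<kappa> \<in> Part \<Longrightarrow> (\<forall>x\<ge>3. T x (v \<kappa>) \<in> FQ int (int (sum_list \<kappa>) + (- int (nat (x - 2)))))
    \<and> (\<forall>x\<ge>2. L x (v \<kappa>) \<in> FQ int (int (sum_list \<kappa>) + phi0P x))"
  using GL[OF A10 B0T B0P, of \<kappa>] unfolding Qp_int by simp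

lemma size_bound: "\<mu> \<in> Part \<Longrightarrow> x \<in> FQ int q \<Longrightarrow> Tw (wd \<mu>) x \<in> FQ int (q - int (sum_list \<mu>))"
  using pot_bound[OF A10 B0T B0P, of \<mu> x q] unfolding Qp_int by simp

lemma size_zero: "\<mu> \<in> Part \<Longrightarrow> x \<in> FQ int q \<Longrightarrow> q < int (sum_list \<mu>) \<Longrightarrow> xi' (Tw (wd \<mu>) x) = 0"
  using size_bound xi'_FQ by fastforce

lemma T_size: "\<kappa> \<in> Part \<Longrightarrow> x \<ge> 3 \<Longrightarrow> T x (v \<kappa>) \<in> FQ int (int (sum_list \<kappa>) + 2 - x)"
proof -
  assume "\<kappa> \<in> Part" "x \<ge> 3"
  then have "T x (v \<kappa>) \<in> FQ int (int (sum_list \<kappa>) + (2 - x))" using size_GL[of \<kappa>] by auto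
  then show ?thesis by (simp only: add_diff_eq)
qed

lemma L_size: "\<kappa> \<in> Part \<Longrightarrow> x \<ge> 2 \<Longrightarrow> L x (v \<kappa>) \<in> FQ int (int (sum_list \<kappa>) + phi0P x)"
  using size_GL[of \<kappa>] by blast

lemma cre_size: "1 \<le> p \<Longrightarrow> \<mu> \<in> Part \<Longrightarrow> L (2 - int p) (v \<mu>) \<in> FQ int (int (sum_list \<mu>) + int p)"
proof -
  assume a: "1 \<le> p" "\<mu> \<in> Part"
  have "L (2 - int p) (v \<mu>) \<in> SB int (int (sum_list \<mu>) + int p) (Qp int \<mu> + int p)"
    by (rule CL'[OF _ a]) simp
  then show ?thesis using SB_FQ unfolding Qp_int by blast
qed

end


primrec Dc :: "complex \<Rightarrow> nat list \<Rightarrow> complex" where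
  "Dc l [] = 1"
| "Dc l (m # ms) = of_nat (2 * m) * l * of_nat (count_list (m # ms) m) * Dc l ms"

lemma one_plus_nat_nz: "(1::complex) + of_nat k \<noteq> 0"
  by (metis of_nat_Suc of_nat_eq_0_iff nat.distinct(1))

lemma Dc_nz: "l \<noteq> 0 \<Longrightarrow> is_partition \<mu> \<Longrightarrow> Dc l \<mu> \<noteq> 0"
  by (induction \<mu>) (auto simp: is_partition_Cons one_plus_nat_nz)

lemma sum_remove1: "m \<in> set xs \<Longrightarrow> sum_list (remove1 m xs) + m = (sum_list xs :: nat)"
  by (induction xs) auto

fun Msr :: "int list \<Rightarrow> int" where
  "Msr [] = 0"
| "Msr (x # w) = Msr w + sum_list w"

lemma Msr_append: "Msr (u @ z) = Msr u + Msr z + int (length u) * sum_list z"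
  by (induction u) (auto simp: algebra_simps)

lemma Msr_swap: "m < n \<Longrightarrow> Msr (u @ n # m # z) < Msr (u @ m # n # z)"
  by (simp add: Msr_append algebra_simps)

lemma Msr_nonneg: "\<forall>x\<in>set w. x \<ge> 0 \<Longrightarrow> Msr w \<ge> 0"
proof (induction w)
  case (Cons x w)
  then have "0 \<le> sum_list w" by (intro sum_list_nonneg) auto
  then show ?case using Cons by simp
qed simp

lemma ascent: "\<not> sorted_wrt (\<ge>) (w :: int list) \<Longrightarrow> \<exists>u m n z. w = u @ m # n # z \<and> m < n"
proof (induction w)
  case Nil
  then show ?case by simp
next
  case (Cons x w)
  show ?case
  proof (cases "sorted_wrt (\<ge>) w")
    case False
    then obtain u m n z where "w = u @ m # n # z" "m < n" using Cons.IH by blast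
    then show ?thesis by (intro exI[of _ "x # u"]) auto
  next
    case True
    then obtain y where y: "y \<in> set w" "x < y" using Cons.prems by auto
    then obtain y0 w' where w: "w = y0 # w'" by (cases w) auto
    have "y \<le> y0" using True y w by auto
    then show ?thesis using y w by (intro exI[of _ "[]"]) auto
  qed
qed

lemma word_ext:
  fixes h :: "int list \<Rightarrow> complex"
  assumes R: "\<And>u m n z. \<forall>x\<in>set (u @ m # n # z). x \<ge> 3 \<Longrightarrow>
                h (u @ m # n # z) - h (u @ n # m # z) = of_int (n - m) * h (u @ (n + m) # z)"
    and Z: "\<And>w. \<forall>x\<in>set w. x \<ge> 3 \<Longrightarrow> sorted_wrt (\<ge>) w \<Longrightarrow> h w = 0"
  shows "\<forall>x\<in>set w. x \<ge> 3 \<Longrightarrow> h w = 0"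
proof -
  have main: "\<forall>w. length w = N \<longrightarrow> nat (Msr w) = K \<longrightarrow> (\<forall>x\<in>set w. x \<ge> 3) \<longrightarrow> h w = 0" for N K
  proof (induction N arbitrary: K rule: less_induct)
    case (less N)
    note outer = less.IH
    show ?case
    proof (induction K rule: less_induct)
      case (less K)
      show ?case
      proof (intro allI impI)
        fix w :: "int list" assume w: "length w = N" "nat (Msr w) = K" "\<forall>x\<in>set w. x \<ge> 3"
        show "h w = 0"
        proof (cases "sorted_wrt (\<ge>) w")
          case True
          then show ?thesis using Z w by blast
        next
          case False
          then obtain u m n z where d: "w = u @ m # n # z" "m < n" using ascent by blast
          have l3: "\<forall>x\<in>set (u @ n # m # z). x \<ge> 3" "\<forall>x\<in>set (u @ (n + m) # z). x \<ge> 3"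
            using w(3) d(1) by auto
          have "\<forall>x\<in>set (u @ n # m # z). x \<ge> 0"
          proof
            fix x assume "x \<in> set (u @ n # m # z)"
            then have "x \<ge> 3" using l3(1) by blast
            then show "x \<ge> 0" by simp
          qed
          then have nn: "Msr (u @ n # m # z) \<ge> 0" by (rule Msr_nonneg)
          have "nat (Msr (u @ n # m # z)) < K" using Msr_swap[OF d(2), of u z] nn w(2) d(1) by simp
          then have h1: "h (u @ n # m # z) = 0" using less.IH l3(1) w(1) d(1) by auto
          have "length (u @ (n + m) # z) < N" using w(1) d(1) by simp
          then have h2: "h (u @ (n + m) # z) = 0" using outer l3(2) by blast
          show ?thesis using R[of u m n z] w(3) d(1) h1 h2 by simp
        qed
      qed
    qed
  qed
  assume "\<forall>x\<in>set w. x \<ge> 3"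
  then show "h w = 0" using main by blast
qed

definition fk :: "nat \<Rightarrow> int list \<Rightarrow> complex" where
  "fk k w = (if w = replicate k 5 then 1 else 0)"

lemma fk_R: "\<forall>x\<in>set (u @ m # n # z). x \<ge> 3 \<Longrightarrow>
   fk k (u @ m # n # z) - fk k (u @ n # m # z) = of_int (n - m) * fk k (u @ (n + m) # z)"
proof -
  assume a: "\<forall>x\<in>set (u @ m # n # z). x \<ge> 3"
  have r: "u @ (n + m) # z \<noteq> replicate k 5"
  proof
    assume "u @ (n + m) # z = replicate k 5"
    then have "n + m \<in> set (replicate k 5)" by (metis in_set_conv_decomp)
    then have "n + m = 5" by simp
    then show False using a by simp
  qed
  show ?thesis
  proof (cases "m = n")
    case False
    have nr: "u @ a1 # b1 # z \<noteq> replicate k 5" if "a1 \<noteq> b1" for a1 b1 :: int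
    proof
      assume e: "u @ a1 # b1 # z = replicate k 5"
      have "a1 \<in> set (replicate k 5)" "b1 \<in> set (replicate k 5)" unfolding e[symmetric] by simp_all
      then show False using that by simp
    qed
    have "u @ m # n # z \<noteq> replicate k 5" "u @ n # m # z \<noteq> replicate k 5"
      using nr False by auto
    then show ?thesis using r by (simp add: fk_def)
  qed simp
qed

context WM begin

lemma FQ_v: "\<kappa> \<in> Part \<Longrightarrow> int (sum_list \<kappa>) \<le> q \<Longrightarrow> v \<kappa> \<in> FQ int q"
  using v_in_FQ[of \<kappa> int q] unfolding Qp_int by simp

lemma Lany: "\<kappa> \<in> Part \<Longrightarrow> L b (v \<kappa>) \<in> FQ int (int (sum_list \<kappa>) + (if b \<le> 1 then 2 - b else if b \<le> 4 then 0 else 2 - b))"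
proof -
  assume k: "\<kappa> \<in> Part"
  consider "b \<le> 1" | "b = 2" | "b = 3" | "b = 4" | "b \<ge> 5" by linarith
  then show ?thesis
  proof cases
    case 1
    have "L (2 - int (nat (2 - b))) (v \<kappa>) \<in> FQ int (int (sum_list \<kappa>) + int (nat (2 - b)))"
      by (rule cre_size[OF _ k]) (use 1 in simp)
    then show ?thesis using 1 by simp
  next
    case 2
    then show ?thesis using L_size[OF k, of 2] by simp
  next
    case 3
    have "L 3 (v \<kappa>) = sm \<Lambda>3 (v \<kappa>) + T 3 (v \<kappa>)" by (simp add: T_def chi0_def)
    moreover have "T 3 (v \<kappa>) \<in> FQ int (int (sum_list \<kappa>))"
      using T_size[OF k, of 3] FQ_mono[of "int (sum_list \<kappa>) + 2 - 3" "int (sum_list \<kappa>)"] by simp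
    ultimately show ?thesis using 3 FQ_v[OF k order_refl] by (simp add: FQ_add FQ_scale)
  next
    case 4
    have "L 4 (v \<kappa>) = sm \<Lambda>4 (v \<kappa>) + T 4 (v \<kappa>)" by (simp add: T_def chi0_def)
    moreover have "T 4 (v \<kappa>) \<in> FQ int (int (sum_list \<kappa>))"
      using T_size[OF k, of 4] FQ_mono[of "int (sum_list \<kappa>) + 2 - 4" "int (sum_list \<kappa>)"] by simp
    ultimately show ?thesis using 4 FQ_v[OF k order_refl] by (simp add: FQ_add FQ_scale)
  next
    case 5
    then show ?thesis using T_size[OF k, of b] L_large[of b] by (simp add: add_diff_eq)
  qed
qed

lemma F2: "1 \<le> m \<Longrightarrow> \<kappa> \<in> Part \<Longrightarrow>
  T (int m + 2) (v \<kappa>) - sm (of_nat (2*m) * \<Lambda>4 * of_nat (count_list \<kappa> m)) (v (remove1 m \<kappa>))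
    \<in> FQ int (int (sum_list \<kappa>) - int m - 1)"
proof (induction \<kappa>)
  case Nil
  then show ?case by (simp add: TJ FQ_zero)
next
  case (Cons p \<kappa>')
  have k: "\<kappa>' \<in> Part" and p: "1 \<le> p" and top: "\<forall>x\<in>set \<kappa>'. x \<le> p"
    using Cons.prems by (auto simp: Part_def is_partition_Cons)
  define n where "n = int m + 2"
  define a where "a = 2 - int p"
  define c' where "c' = of_nat (2*m) * \<Lambda>4 * of_nat (count_list \<kappa>' m)"
  define R where "R = T n (v \<kappa>') - sm c' (v (remove1 m \<kappa>'))"
  define E where "E = sm (of_int (n - a)) (L (n + a) (v \<kappa>'))
     + (if n + a = 0 then sm (c / 12 * of_int (n ^ 3 - n)) (v \<kappa>') else 0)"
  have IH: "R \<in> FQ int (int (sum_list \<kappa>') - int m - 1)"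
    using Cons.IH[OF Cons.prems(1) k] by (simp add: R_def n_def c'_def)
  have dec: "T n (v (p # \<kappa>')) = L a R + sm c' (v (p # remove1 m \<kappa>')) + E"
  proof -
    have "T n (v (p # \<kappa>')) = L a (T n (v \<kappa>')) + E"
      using commTv[of n p \<kappa>'] unfolding E_def a_def by (simp only: add.assoc)
    moreover have "L a (T n (v \<kappa>')) = L a R + sm c' (v (p # remove1 m \<kappa>'))"
    proof -
      have "T n (v \<kappa>') = R + sm c' (v (remove1 m \<kappa>'))" unfolding R_def by simp
      then have "L a (T n (v \<kappa>')) = L a R + L a (sm c' (v (remove1 m \<kappa>')))" using L_add by metis
      also have "L a (sm c' (v (remove1 m \<kappa>'))) = sm c' (v (p # remove1 m \<kappa>'))"
        unfolding L_scale a_def v_Cons ..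
      finally show ?thesis .
    qed
    ultimately show ?thesis by metis
  qed
  have LR: "L a R \<in> FQ int (int (sum_list (p # \<kappa>')) - int m - 1)"
  proof (rule FQ_map[OF L_add L_scale IH])
    fix \<rho> assume "\<rho> \<in> Part" "Qp int \<rho> \<le> int (sum_list \<kappa>') - int m - 1"
    then have r: "\<rho> \<in> Part" and le: "int (sum_list \<rho>) + int p \<le> int (sum_list (p # \<kappa>')) - int m - 1"
      unfolding Qp_int by simp_all
    show "L a (v \<rho>) \<in> FQ int (int (sum_list (p # \<kappa>')) - int m - 1)"
      unfolding a_def using FQ_mono[OF le cre_size[OF p r]] .
  qed
  show ?case
  proof (cases "p = m")
    case True
    have na: "n + a = 4" "n - a = int (2 * m)" using True by (simp_all add: n_def a_def)
    have E: "E = sm (of_nat (2 * m)) (sm \<Lambda>4 (v \<kappa>') + T 4 (v \<kappa>'))"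
      unfolding E_def na by (simp add: T_def chi0_def)
    have cv: "sm c' (v (p # remove1 m \<kappa>')) = sm c' (v \<kappa>')"
    proof (cases "m \<in> set \<kappa>'")
      case True
      then show ?thesis using cons_remove1[of p \<kappa>'] Cons.prems \<open>p = m\<close> by (simp add: Part_def)
    next
      case False
      then show ?thesis by (simp add: c'_def)
    qed
    have T4: "T 4 (v \<kappa>') \<in> FQ int (int (sum_list (p # \<kappa>')) - int m - 1)"
    proof -
      have le: "int (sum_list \<kappa>') + 2 - 4 \<le> int (sum_list (p # \<kappa>')) - int m - 1" using True by simp
      show ?thesis using FQ_mono[OF le T_size[OF k, of 4]] by simp
    qed
    have "T (int m + 2) (v (p # \<kappa>')) - sm (of_nat (2*m) * \<Lambda>4 * of_nat (count_list (p # \<kappa>') m)) (v (remove1 m (p # \<kappa>')))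
        = L a R + sm (of_nat (2 * m)) (T 4 (v \<kappa>'))"
      unfolding n_def[symmetric] dec cv E using True
      by (simp add: c'_def scale_right_distrib scale_left_distrib algebra_simps)
    then show ?thesis using FQ_add[OF LR FQ_scale[OF T4]] by simp
  next
    case False
    have Lb: "L (n + a) (v \<kappa>') \<in> FQ int (int (sum_list (p # \<kappa>')) - int m - 1)"
    proof -
      have "L (n + a) (v \<kappa>') \<in> FQ int (int (sum_list \<kappa>') + (if n + a \<le> 1 then 2 - (n + a) else if n + a \<le> 4 then 0 else 2 - (n + a)))"
        by (rule Lany[OF k])
      moreover have "int (sum_list \<kappa>') + (if n + a \<le> 1 then 2 - (n + a) else if n + a \<le> 4 then 0 else 2 - (n + a))
          \<le> int (sum_list (p # \<kappa>')) - int m - 1"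
        using False p by (auto simp: n_def a_def)
      ultimately show ?thesis using FQ_mono by blast
    qed
    have cen: "(if n + a = 0 then sm (c / 12 * of_int (n ^ 3 - n)) (v \<kappa>') else 0) \<in> FQ int (int (sum_list (p # \<kappa>')) - int m - 1)"
    proof (cases "n + a = 0")
      case True
      then have "int (sum_list \<kappa>') \<le> int (sum_list (p # \<kappa>')) - int m - 1" by (simp add: n_def a_def)
      then show ?thesis using True FQ_v[OF k] by (simp add: FQ_scale)
    qed (simp add: FQ_zero)
    have EE: "E \<in> FQ int (int (sum_list (p # \<kappa>')) - int m - 1)"
      unfolding E_def using Lb cen by (simp add: FQ_add FQ_scale)
    have "T (int m + 2) (v (p # \<kappa>')) - sm (of_nat (2*m) * \<Lambda>4 * of_nat (count_list (p # \<kappa>') m)) (v (remove1 m (p # \<kappa>')))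
        = L a R + E"
      unfolding n_def[symmetric] dec using False by (simp add: c'_def)
    then show ?thesis using FQ_add[OF LR EE] by simp
  qed
qed


lemma Tw_sum: "Tw w (sum g A) = (\<Sum>a\<in>A. Tw w (g a))"
  by (induction A rule: infinite_finite_induct) (auto simp: Tw_add)

lemma xi'_sum: "xi' (sum g A) = (\<Sum>a\<in>A. xi' (g a))"
  by (induction A rule: infinite_finite_induct) (auto simp: xi'_add)

lemma D: "\<mu> \<in> Part \<Longrightarrow> lam \<in> Part \<Longrightarrow> sum_list lam \<le> sum_list \<mu> \<Longrightarrow>
   xi' (Tw (wd \<mu>) (v lam)) = (if mset \<mu> = mset lam then Dc \<Lambda>4 \<mu> else 0)"
proof (induction \<mu> arbitrary: lam)
  case Nil
  then have "lam = []" using sum0_Nil by (simp add: Part_def)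
  then show ?case by (simp add: xi'_J)
next
  case (Cons m \<mu>')
  have mu': "\<mu>' \<in> Part" and m: "1 \<le> m" using Cons.prems by (auto simp: Part_def is_partition_Cons)
  define C where "C = of_nat (2*m) * \<Lambda>4 * of_nat (count_list lam m)"
  define R where "R = T (int m + 2) (v lam) - sm C (v (remove1 m lam))"
  have R: "R \<in> FQ int (int (sum_list lam) - int m - 1)"
    unfolding R_def C_def by (rule F2[OF m Cons.prems(2)])
  have R0: "xi' (Tw (wd \<mu>') R) = 0"
    by (rule size_zero[OF mu' R]) (use Cons.prems(3) in simp)
  have "Tw (wd (m # \<mu>')) (v lam) = Tw (wd \<mu>') R + sm C (Tw (wd \<mu>') (v (remove1 m lam)))"
    by (simp add: R_def Tw_diff Tw_scale)
  then have eq: "xi' (Tw (wd (m # \<mu>')) (v lam)) = C * xi' (Tw (wd \<mu>') (v (remove1 m lam)))"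
    using R0 by (simp add: xi'_add xi'_scale)
  show ?case
  proof (cases "m \<in> set lam")
    case False
    then have "mset (m # \<mu>') \<noteq> mset lam" by (metis list.set_intros(1) set_mset_mset)
    then show ?thesis using eq False by (simp add: C_def)
  next
    case True
    have r: "remove1 m lam \<in> Part" using Cons.prems(2) part_remove1 by (simp add: Part_def)
    have "sum_list (remove1 m lam) \<le> sum_list \<mu>'"
      using sum_remove1[OF True] Cons.prems(3) by simp
    note IH = Cons.IH[OF mu' r this]
    have iff: "mset (m # \<mu>') = mset lam \<longleftrightarrow> mset \<mu>' = mset (remove1 m lam)"
    proof -
      have mm: "m \<in># mset lam" using True by simp
      show ?thesis
      proof
        assume "mset (m # \<mu>') = mset lam"
        then show "mset \<mu>' = mset (remove1 m lam)" by (metis add_mset_remove_trivial mset.simps(2) mset_remove1)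
      next
        assume "mset \<mu>' = mset (remove1 m lam)"
        then show "mset (m # \<mu>') = mset lam" using mm by simp
      qed
    qed
    have cnt: "mset (m # \<mu>') = mset lam \<Longrightarrow> count_list lam m = count_list (m # \<mu>') m"
      by (metis count_mset)
    show ?thesis unfolding eq IH using iff cnt by (auto simp: C_def)
  qed
qed

lemma indep_lemma:
  assumes "finite A"
  shows "A \<subseteq> Part \<Longrightarrow> (\<forall>\<mu>\<in>Part. xi' (Tw (wd \<mu>) (\<Sum>lam\<in>A. sm (f lam) (v lam))) = 0) \<Longrightarrow> \<forall>lam\<in>A. f lam = 0"
  using assms
proof (induction A rule: finite_ranking_induct[where f = sum_list])
  case empty
  then show ?case by simp
next
  case (insert x S)
  show ?case
  proof (cases "x \<in> S")
    case True
    then show ?thesis using insert by (simp add: insert_absorb)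
  next
    case False
    have x: "x \<in> Part" using insert.prems by simp
    have vals: "xi' (Tw (wd x) (sm (f lam) (v lam))) = (if lam = x then f x * Dc \<Lambda>4 x else 0)"
      if "lam \<in> insert x S" for lam
    proof -
      have l: "lam \<in> Part" using that insert.prems by auto
      have le: "sum_list lam \<le> sum_list x" using that insert.hyps by auto
      have "mset x = mset lam \<longleftrightarrow> lam = x" using partition_unique l x by (auto simp: Part_def)
      then show ?thesis using D[OF x l le] by (simp add: Tw_scale xi'_scale)
    qed
    have "xi' (Tw (wd x) (\<Sum>lam\<in>insert x S. sm (f lam) (v lam))) = f x * Dc \<Lambda>4 x"
      unfolding Tw_sum xi'_sum using vals insert.hyps(1) False
      by (simp add: sum.insert)
    moreover have "Dc \<Lambda>4 x \<noteq> 0" using Dc_nz L4nz x by (simp add: Part_def)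
    ultimately have fx: "f x = 0" using insert.prems x by auto
    then have "(\<Sum>lam\<in>insert x S. sm (f lam) (v lam)) = (\<Sum>lam\<in>S. sm (f lam) (v lam))"
      using insert.hyps(1) False by simp
    then have "\<forall>lam\<in>S. f lam = 0" using insert.IH insert.prems by simp
    then show ?thesis using fx by simp
  qed
qed

lemma inj_xi: assumes "\<forall>\<mu>\<in>Part. xi' (Tw (wd \<mu>) x) = 0" shows "x = 0"
proof -
  have "x \<in> span (v ` Part)" using spanB by simp
  then obtain t r where t: "finite t" "t \<subseteq> v ` Part" "x = (\<Sum>a\<in>t. sm (r a) a)"
    unfolding span_explicit by blast
  define A where "A = {lam\<in>Part. v lam \<in> t}"
  have tA: "t = v ` A" using t(2) by (auto simp: A_def)
  have injA: "inj_on v A" using inj_v by (rule inj_on_subset) (auto simp: A_def)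
  have fA: "finite A" using t(1) tA finite_imageD injA by blast
  have x: "x = (\<Sum>lam\<in>A. sm (r (v lam)) (v lam))"
    unfolding t(3) tA by (simp add: sum.reindex[OF injA])
  have "\<forall>lam\<in>A. r (v lam) = 0"
    by (rule indep_lemma[OF fA]) (use assms x in \<open>auto simp: A_def\<close>)
  then show ?thesis unfolding x by simp
qed

lemma eq_xi: assumes "\<forall>\<mu>\<in>Part. xi' (Tw (wd \<mu>) x) = xi' (Tw (wd \<mu>) y)" shows "x = y"
proof -
  have "x - y = 0" by (rule inj_xi) (use assms in \<open>simp add: Tw_diff xi'_diff\<close>)
  then show ?thesis by simp
qed


lemma span_sub_FQ: "span (v ` {la\<in>S. sum_list la \<le> m}) \<subseteq> FQ int (int m)" if "S \<subseteq> Part"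
  unfolding FQ_def Qp_int by (rule span_mono) (use that in auto)

lemma solve: "S \<subseteq> Part \<Longrightarrow> \<forall>t. \<exists>x \<in> span (v ` {la\<in>S. sum_list la \<le> m}). \<forall>\<mu>\<in>S. sum_list \<mu> \<le> m \<longrightarrow> xi' (Tw (wd \<mu>) x) = t \<mu>"
proof (induction m)
  case 0
  show ?case
  proof
    fix t
    show "\<exists>x \<in> span (v ` {la\<in>S. sum_list la \<le> 0}). \<forall>\<mu>\<in>S. sum_list \<mu> \<le> 0 \<longrightarrow> xi' (Tw (wd \<mu>) x) = t \<mu>"
    proof (cases "[] \<in> S")
      case True
      have "J \<in> span (v ` {la\<in>S. sum_list la \<le> 0})" by (rule span_base) (use True in force)
      then have "sm (t []) J \<in> span (v ` {la\<in>S. sum_list la \<le> 0})" by (rule span_scale)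
      moreover have "\<forall>\<mu>\<in>S. sum_list \<mu> \<le> 0 \<longrightarrow> xi' (Tw (wd \<mu>) (sm (t []) J)) = t \<mu>"
      proof (intro ballI impI)
        fix \<mu> assume mu: "\<mu> \<in> S" "sum_list \<mu> \<le> 0"
        have "is_partition \<mu>" using mu "0.prems" by (auto simp: Part_def)
        moreover have "sum_list \<mu> = 0" using mu by simp
        ultimately have "\<mu> = []" by (rule sum0_Nil)
        then show "xi' (Tw (wd \<mu>) (sm (t []) J)) = t \<mu>" by (simp add: xi'_scale xi'_J)
      qed
      ultimately show ?thesis by blast
    next
      case False
      have "\<forall>\<mu>\<in>S. sum_list \<mu> \<le> 0 \<longrightarrow> xi' (Tw (wd \<mu>) 0) = t \<mu>"
      proof (intro ballI impI)
        fix \<mu> assume mu: "\<mu> \<in> S" "sum_list \<mu> \<le> 0"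
        have "is_partition \<mu>" using mu "0.prems" by (auto simp: Part_def)
        moreover have "sum_list \<mu> = 0" using mu by simp
        ultimately have "\<mu> = []" by (rule sum0_Nil)
        then show "xi' (Tw (wd \<mu>) 0) = t \<mu>" using mu False by simp
      qed
      then show ?thesis using span_zero by blast
    qed
  qed
next
  case (Suc m)
  show ?case
  proof
    fix t
    define N where "N = {la\<in>S. sum_list la = Suc m}"
    have fN: "finite N"
      by (rule finite_subset[OF _ finite_parts[of "Suc m"]]) (use Suc.prems in \<open>auto simp: N_def Part_def\<close>)
    define y where "y = (\<Sum>la\<in>N. sm (t la / Dc \<Lambda>4 la) (v la))"
    have ysp: "y \<in> span (v ` {la\<in>S. sum_list la \<le> Suc m})"
      unfolding y_def by (intro span_sum span_scale span_base) (auto simp: N_def)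
    have yval: "xi' (Tw (wd \<mu>) y) = t \<mu>" if mu: "\<mu> \<in> N" for \<mu>
    proof -
      have mP: "\<mu> \<in> Part" using mu Suc.prems by (auto simp: N_def)
      have "xi' (Tw (wd \<mu>) (sm (t la / Dc \<Lambda>4 la) (v la))) = (if la = \<mu> then t \<mu> else 0)" if la: "la \<in> N" for la
      proof -
        have lP: "la \<in> Part" using la Suc.prems by (auto simp: N_def)
        have le: "sum_list la \<le> sum_list \<mu>" using la mu by (auto simp: N_def)
        have "mset \<mu> = mset la \<longleftrightarrow> la = \<mu>" using partition_unique lP mP by (auto simp: Part_def)
        moreover have "Dc \<Lambda>4 \<mu> \<noteq> 0" using Dc_nz L4nz mP by (simp add: Part_def)
        ultimately show ?thesis using D[OF mP lP le] by (simp add: Tw_scale xi'_scale)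
      qed
      then have "xi' (Tw (wd \<mu>) y) = (\<Sum>la\<in>N. if la = \<mu> then t \<mu> else 0)"
        unfolding y_def Tw_sum xi'_sum by (intro sum.cong) auto
      also have "\<dots> = t \<mu>" using mu fN by simp
      finally show ?thesis .
    qed
    obtain z where z: "z \<in> span (v ` {la\<in>S. sum_list la \<le> m})"
      and zv: "\<forall>\<mu>\<in>S. sum_list \<mu> \<le> m \<longrightarrow> xi' (Tw (wd \<mu>) z) = t \<mu> - xi' (Tw (wd \<mu>) y)"
      using spec[OF Suc.IH[OF Suc.prems], of "\<lambda>\<mu>. t \<mu> - xi' (Tw (wd \<mu>) y)"] by blast
    have zsp: "z \<in> span (v ` {la\<in>S. sum_list la \<le> Suc m})"
    proof -
      have "v ` {la\<in>S. sum_list la \<le> m} \<subseteq> v ` {la\<in>S. sum_list la \<le> Suc m}" by auto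
      then show ?thesis using z span_mono by blast
    qed
    have zFQ: "z \<in> FQ int (int m)" using z span_sub_FQ[OF Suc.prems] by blast
    have "\<forall>\<mu>\<in>S. sum_list \<mu> \<le> Suc m \<longrightarrow> xi' (Tw (wd \<mu>) (y + z)) = t \<mu>"
    proof (intro ballI impI)
      fix \<mu> assume mu: "\<mu> \<in> S" "sum_list \<mu> \<le> Suc m"
      show "xi' (Tw (wd \<mu>) (y + z)) = t \<mu>"
      proof (cases "sum_list \<mu> \<le> m")
        case True
        then show ?thesis using zv mu by (simp add: Tw_add xi'_add)
      next
        case False
        then have "\<mu> \<in> N" using mu by (auto simp: N_def)
        moreover have "xi' (Tw (wd \<mu>) z) = 0"
          by (rule size_zero[OF _ zFQ]) (use mu Suc.prems False in auto)
        ultimately show ?thesis using yval by (simp add: Tw_add xi'_add)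
      qed
    qed
    then show "\<exists>x \<in> span (v ` {la\<in>S. sum_list la \<le> Suc m}). \<forall>\<mu>\<in>S. sum_list \<mu> \<le> Suc m \<longrightarrow> xi' (Tw (wd \<mu>) x) = t \<mu>"
      using span_add[OF ysp zsp] by blast
  qed
qed

lemma commTT: "n \<ge> 3 \<Longrightarrow> m \<ge> 3 \<Longrightarrow> T n (T m y) - T m (T n y) = sm (of_int (n - m)) (T (n + m) y)"
proof -
  assume a: "n \<ge> 3" "m \<ge> 3"
  have "T n (T m y) - T m (T n y) = L n (L m y) - L m (L n y)"
    by (simp add: T_def L_diff L_scale algebra_simps scale_left_commute)
  also have "\<dots> = sm (of_int (n - m)) (L (n + m) y)" using comm[of n m y] a by simp
  also have "\<dots> = sm (of_int (n - m)) (T (n + m) y)" using L_large[of "n + m" y] a by simp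
  finally show ?thesis .
qed

lemma g_R: "\<forall>x\<in>set (u @ m # n # z). x \<ge> 3 \<Longrightarrow>
   xi' (Tw (u @ m # n # z) y) - xi' (Tw (u @ n # m # z) y) = of_int (n - m) * xi' (Tw (u @ (n + m) # z) y)"
proof -
  assume a: "\<forall>x\<in>set (u @ m # n # z). x \<ge> 3"
  have "xi' (Tw (u @ m # n # z) y) - xi' (Tw (u @ n # m # z) y)
      = xi' (Tw z (T n (T m (Tw u y)) - T m (T n (Tw u y))))"
    by (simp add: Tw_append Tw_diff xi'_diff)
  also have "\<dots> = xi' (Tw z (sm (of_int (n - m)) (T (n + m) (Tw u y))))"
    using commTT[of n m "Tw u y"] a by simp
  also have "\<dots> = of_int (n - m) * xi' (Tw (u @ (n + m) # z) y)"
    by (simp add: Tw_append Tw_scale xi'_scale)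
  finally show ?thesis .
qed


lemma deg_bound:
  assumes d: "d = 1 \<or> (d = 2 \<and> \<Lambda>3 = 0)" and mu: "\<mu> \<in> Part" and la: "la \<in> Part"
    and nz: "xi' (Tw (wd \<mu>) (v la)) \<noteq> 0"
  shows "deg_delta d \<mu> \<le> deg_delta d la"
proof -
  define \<psi> where "\<psi> = (\<lambda>p. int (deg_part d p))"
  have vl: "v la \<in> FQ \<psi> (Qp \<psi> la)" using v_in_FQ[OF la] by simp
  have A11: "\<And>p q. 1 \<le> p \<Longrightarrow> p < q \<Longrightarrow> int (deg_part 1 (p + q - 2)) \<le> int (deg_part 1 p) + int (deg_part 1 q)"
    using A1d[of 1] by simp
  have A12: "\<And>p q. 1 \<le> p \<Longrightarrow> p < q \<Longrightarrow> int (deg_part 2 (p + q - 2)) \<le> int (deg_part 2 p) + int (deg_part 2 q)"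
    using A1d[of 2] by simp
  have "Tw (wd \<mu>) (v la) \<in> FQ \<psi> (Qp \<psi> la - Qp \<psi> \<mu>)"
    using d
  proof
    assume d1: "d = 1"
    show ?thesis unfolding \<psi>_def d1
      by (rule pot_bound[OF A11 B1T B1P _ _ _ mu]) (use vl in \<open>simp_all add: \<psi>_def d1\<close>)
  next
    assume d2: "d = 2 \<and> \<Lambda>3 = 0"
    then have d2': "d = 2" by simp
    show ?thesis unfolding \<psi>_def d2'
      by (rule pot_bound[OF A12 B2T B2P _ _ _ mu]) (use vl d2 in \<open>simp_all add: \<psi>_def d2'\<close>)
  qed
  then have "\<not> (Qp \<psi> la - Qp \<psi> \<mu> < 0)" using xi'_FQ nz by blast
  then show ?thesis unfolding \<psi>_def Qp_deg by simp
qed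

lemma size_bound2: "\<mu> \<in> Part \<Longrightarrow> la \<in> Part \<Longrightarrow> xi' (Tw (wd \<mu>) (v la)) \<noteq> 0 \<Longrightarrow> sum_list \<mu> \<le> sum_list la"
  using size_zero[OF _ FQ_v[OF _ order_refl]] by force

definition Sk :: "nat \<Rightarrow> nat list set" where
  "Sk k = {la \<in> Part. sum_list la \<le> 3 * k \<and> deg_delta 1 la \<le> k \<and> (\<Lambda>3 = 0 \<longrightarrow> deg_delta 2 la \<le> k)}"

lemma Sk_Part: "Sk k \<subseteq> Part" by (auto simp: Sk_def)

lemma rep3: "replicate k 3 \<in> Sk k"
proof -
  have "deg_delta d (replicate k 3) = k" for d by (induction k) (auto simp: deg_delta_def deg_part_def)
  moreover have "is_partition (replicate k 3)" by (induction k) (auto simp: is_partition_Cons)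
  ultimately show ?thesis by (simp add: Sk_def Part_def sum_list_replicate)
qed

lemma Sk_down: "la \<in> Sk k \<Longrightarrow> \<mu> \<in> Part \<Longrightarrow> xi' (Tw (wd \<mu>) (v la)) \<noteq> 0 \<Longrightarrow> \<mu> \<in> Sk k"
proof -
  assume la: "la \<in> Sk k" and mu: "\<mu> \<in> Part" and nz: "xi' (Tw (wd \<mu>) (v la)) \<noteq> 0"
  have lP: "la \<in> Part" using la by (simp add: Sk_def)
  have "sum_list \<mu> \<le> sum_list la" by (rule size_bound2[OF mu lP nz])
  moreover have "deg_delta 1 \<mu> \<le> deg_delta 1 la" by (rule deg_bound[OF _ mu lP nz]) simp
  moreover have "\<Lambda>3 = 0 \<Longrightarrow> deg_delta 2 \<mu> \<le> deg_delta 2 la" by (rule deg_bound[OF _ mu lP nz]) simp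
  ultimately show ?thesis using la mu by (auto simp: Sk_def)
qed

lemma Sk_zero: "x \<in> span (v ` Sk k) \<Longrightarrow> \<mu> \<in> Part \<Longrightarrow> \<mu> \<notin> Sk k \<Longrightarrow> xi' (Tw (wd \<mu>) x) = 0"
proof (induction x rule: span_induct_alt)
  case (step a x y)
  then obtain la where "x = v la" "la \<in> Sk k" by auto
  then have "xi' (Tw (wd \<mu>) x) = 0" using Sk_down step.prems by blast
  then show ?case using step by (simp add: Tw_add Tw_scale xi'_add xi'_scale)
qed simp

lemma wd_inj: "wd a = wd b \<Longrightarrow> a = b"
  unfolding wd_def by (rule inj_onD[OF inj_on_mapI[of "\<lambda>m. int m + 2"]]) (auto simp: inj_on_def)

lemma exists_k: "\<exists>x. x \<in> span (v ` Sk k) \<and> (\<forall>w. (\<forall>n\<in>set w. n \<ge> 3) \<longrightarrow> xi' (Tw w x) = fk k w)"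
proof -
  define t where "t \<mu> = (if \<mu> = replicate k (3::nat) then 1 else (0::complex))" for \<mu> :: "nat list"
  have eqS: "{la\<in>Sk k. sum_list la \<le> 3 * k} = Sk k" by (auto simp: Sk_def)
  obtain x where x: "x \<in> span (v ` Sk k)" and xv: "\<forall>\<mu>\<in>Sk k. xi' (Tw (wd \<mu>) x) = t \<mu>"
    using spec[OF solve[OF Sk_Part[of k], where m = "3 * k"], of t] unfolding eqS by (auto simp: Sk_def)
  have sorted_ok: "xi' (Tw w x) = fk k w" if w: "\<forall>n\<in>set w. n \<ge> 3" "sorted_wrt (\<ge>) w" for w
  proof -
    define \<mu> where "\<mu> = map (\<lambda>n. nat (n - 2)) w"
    have wmu: "wd \<mu> = w" unfolding \<mu>_def wd_def using w(1) by (induction w) auto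
    have mP: "\<mu> \<in> Part"
      unfolding Part_def is_partition_def \<mu>_def using w
      by (auto simp: sorted_wrt_map elim!: sorted_wrt_mono_rel[rotated])
    have ft: "fk k w = t \<mu>"
    proof -
      have "w = replicate k 5 \<longleftrightarrow> \<mu> = replicate k 3"
      proof
        assume "w = replicate k 5" then show "\<mu> = replicate k 3" by (simp add: \<mu>_def)
      next
        assume "\<mu> = replicate k 3"
        then have "wd \<mu> = wd (replicate k 3)" by simp
        then show "w = replicate k 5" using wmu by (simp add: wd_def)
      qed
      then show ?thesis by (simp add: fk_def t_def)
    qed
    show ?thesis
    proof (cases "\<mu> \<in> Sk k")
      case True
      then have "xi' (Tw (wd \<mu>) x) = t \<mu>" using xv by blast
      then show ?thesis using ft wmu by simp
    next
      case False
      then have "\<mu> \<noteq> replicate k 3" using rep3 by auto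
      then show ?thesis using Sk_zero[OF x mP False] ft wmu by (simp add: t_def)
    qed
  qed
  have "xi' (Tw w x) - fk k w = 0" if "\<forall>n\<in>set w. n \<ge> 3" for w
  proof (rule word_ext[where h = "\<lambda>w. xi' (Tw w x) - fk k w", OF _ _ that])
    fix u m n z assume a: "\<forall>x\<in>set (u @ m # n # z). (3::int) \<le> x"
    have g': "xi' (Tw (u @ m # n # z) x) = of_int (n - m) * xi' (Tw (u @ (n + m) # z) x) + xi' (Tw (u @ n # m # z) x)"
      using g_R[OF a, of x] by (simp only: diff_eq_eq)
    have f': "fk k (u @ m # n # z) = of_int (n - m) * fk k (u @ (n + m) # z) + fk k (u @ n # m # z)"
      using fk_R[OF a, of k] by (simp only: diff_eq_eq)
    show "xi' (Tw (u @ m # n # z) x) - fk k (u @ m # n # z) - (xi' (Tw (u @ n # m # z) x) - fk k (u @ n # m # z)) =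
          of_int (n - m) * (xi' (Tw (u @ (n + m) # z) x) - fk k (u @ (n + m) # z))"
      unfolding g' f' by (simp add: algebra_simps)
  next
    fix w assume "\<forall>x\<in>set w. (3::int) \<le> x" "sorted_wrt (\<ge>) w"
    then show "xi' (Tw w x) - fk k w = 0" using sorted_ok by simp
  qed
  then show ?thesis using x by auto
qed


definition Psi :: "nat \<Rightarrow> 'v" where
  "Psi k = (SOME x. x \<in> span (v ` Sk k) \<and> (\<forall>w. (\<forall>n\<in>set w. n \<ge> 3) \<longrightarrow> xi' (Tw w x) = fk k w))"

lemma Psi_prop: "Psi k \<in> span (v ` Sk k)" "\<forall>n\<in>set w. n \<ge> 3 \<Longrightarrow> xi' (Tw w (Psi k)) = fk k w"
  using someI_ex[OF exists_k[of k]] unfolding Psi_def[symmetric] by blast+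

lemma wd_Part_ge3: "\<mu> \<in> Part \<Longrightarrow> \<forall>n\<in>set (wd \<mu>). n \<ge> 3"
  using wd_ge3 by (auto simp: Part_def)

lemma fun_eq: assumes "\<And>w. \<forall>n\<in>set w. n \<ge> 3 \<Longrightarrow> xi' (Tw w x) = fk k w"
    and "\<And>w. \<forall>n\<in>set w. n \<ge> 3 \<Longrightarrow> xi' (Tw w y) = fk k w"
  shows "x = y"
  by (rule eq_xi) (use assms wd_Part_ge3 in auto)

lemma T_zero_of: assumes "\<And>w. \<forall>n\<in>set w. n \<ge> 3 \<Longrightarrow> xi' (Tw (n0 # w) x) = 0" and "n0 \<ge> 3"
  shows "T n0 x = 0"
  by (rule inj_xi) (use assms wd_Part_ge3 in auto)

lemma fk_Cons: "fk k (n # w) = (if n = 5 then (case k of 0 \<Rightarrow> 0 | Suc k' \<Rightarrow> fk k' w) else 0)"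
  by (cases k) (auto simp: fk_def)

lemma Psi_cond: "psi_conditions sm L J \<Lambda>3 \<Lambda>4 Psi"
proof -
  have T0: "T n (Psi k) = 0" if "n \<ge> 3" "n \<noteq> 5" for n k
    by (rule T_zero_of[OF _ that(1)]) (use that Psi_prop(2)[of "n # _" k] in \<open>simp add: fk_Cons\<close>)
  have P0: "Psi 0 = J"
  proof (rule fun_eq[where k = 0])
    show "xi' (Tw w (Psi 0)) = fk 0 w" if "\<forall>n\<in>set w. n \<ge> 3" for w using Psi_prop(2) that by blast
    show "xi' (Tw w J) = fk 0 w" if "\<forall>n\<in>set w. n \<ge> 3" for w
    proof (cases w)
      case Nil then show ?thesis by (simp add: xi'_J fk_def)
    next
      case (Cons n w') then show ?thesis using that by (simp add: TJ fk_Cons)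
    qed
  qed
  have L5_0: "L 5 (Psi 0) = 0"
    using T_zero_of[of 5 "Psi 0"] Psi_prop(2)[of "5 # _" 0] L_large[of 5] by (simp add: fk_Cons)
  have L5_S: "L 5 (Psi (Suc k)) = Psi k" for k
  proof (rule fun_eq[where k = k])
    show "xi' (Tw w (L 5 (Psi (Suc k)))) = fk k w" if "\<forall>n\<in>set w. n \<ge> 3" for w
      using Psi_prop(2)[of "5 # w" "Suc k"] that L_large[of 5] by (simp add: fk_Cons)
    show "xi' (Tw w (Psi k)) = fk k w" if "\<forall>n\<in>set w. n \<ge> 3" for w using Psi_prop(2) that by blast
  qed
  have L3: "L 3 (Psi k) = sm \<Lambda>3 (Psi k)" for k using T0[of 3 k] by (simp add: T_def chi0_def)
  have L4: "L 4 (Psi k) = sm \<Lambda>4 (Psi k)" for k using T0[of 4 k] by (simp add: T_def chi0_def)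
  have Lbig: "L n (Psi k) = 0" if "n > 5" for n k using T0[of n k] that L_large[of n] by simp
  have X: "xi sm L J (Psi k) = (if k = 0 then 1 else 0)" for k
    using Psi_prop(2)[of "[]" k] by (cases k) (auto simp: xi_eq fk_def)
  show ?thesis unfolding psi_conditions_def using P0 L3 L4 L5_0 L5_S Lbig X by blast
qed

lemma cond_fun:
  assumes C: "psi_conditions sm L J \<Lambda>3 \<Lambda>4 \<Psi>"
  shows "\<forall>n\<in>set w. n \<ge> 3 \<Longrightarrow> xi' (Tw w (\<Psi> k)) = fk k w"
proof (induction w arbitrary: k)
  case Nil
  then show ?case using C by (auto simp: psi_conditions_def xi_eq fk_def)
next
  case (Cons n w)
  have n3: "n \<ge> 3" and w3: "\<forall>n\<in>set w. n \<ge> 3" using Cons.prems by auto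
  show ?case
  proof (cases "n = 5")
    case True
    show ?thesis
    proof (cases k)
      case 0
      then have "T n (\<Psi> k) = 0" using C True L_large[of 5] by (simp add: psi_conditions_def TJ)
      then show ?thesis using True 0 by (simp add: fk_Cons)
    next
      case (Suc k')
      then have "T n (\<Psi> k) = \<Psi> k'" using C True L_large[of 5] by (simp add: psi_conditions_def TJ)
      then show ?thesis using True Suc Cons.IH[OF w3] by (simp add: fk_Cons)
    qed
  next
    case False
    have "T n (\<Psi> k) = 0"
    proof -
      have "n = 3 \<or> n = 4 \<or> n > 5" using n3 False by linarith
      then show ?thesis using C L_large[of n] by (auto simp: psi_conditions_def T_def chi0_def)
    qed
    then show ?thesis using False by (simp add: fk_Cons)
  qed
qed

lemma cond_Psi: "psi_conditions sm L J \<Lambda>3 \<Lambda>4 \<Psi> \<Longrightarrow> \<Psi> k = Psi k"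
  by (rule fun_eq[where k = k]) (auto intro: cond_fun Psi_prop(2))

lemma V_sub: "span (v ` Sk k) \<subseteq> V_space sm L J 1 k"
  and V_sub2: "\<Lambda>3 = 0 \<Longrightarrow> span (v ` Sk k) \<subseteq> V_space sm L J 2 k"
proof -
  have U: "v la \<in> U_space sm L J (3 * k)" if "la \<in> Sk k" for la
    unfolding U_space_def by (rule span_base) (use that in \<open>auto simp: Sk_def Part_def\<close>)
  show "span (v ` Sk k) \<subseteq> V_space sm L J 1 k"
    unfolding V_space_def by (rule span_mono) (use U in \<open>auto simp: Sk_def Part_def\<close>)
  assume z: "\<Lambda>3 = 0"
  have D2: "is_partition la \<and> deg_delta 2 la \<le> k" if "la \<in> Sk k" for la
    using that z unfolding Sk_def Part_def by blast
  have "v ` Sk k \<subseteq> {vir_word L J lam | lam. is_partition lam \<and> vir_word L J lam \<in> U_space sm L J (3 * k)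
                              \<and> deg_delta 2 lam \<le> k}"
  proof
    fix y assume "y \<in> v ` Sk k"
    then obtain la where "y = v la" "la \<in> Sk k" by blast
    then show "y \<in> {vir_word L J lam | lam. is_partition lam \<and> vir_word L J lam \<in> U_space sm L J (3 * k)
                              \<and> deg_delta 2 lam \<le> k}" using U D2 by blast
  qed
  then show "span (v ` Sk k) \<subseteq> V_space sm L J 2 k"
    unfolding V_space_def by (rule span_mono)
qed

lemma V21: "V_space sm L J 2 k \<subseteq> V_space sm L J 1 k"
proof -
  have "deg_delta 1 lam \<le> deg_delta 2 lam" for lam
    unfolding deg_delta_def by (induction lam) (auto simp: deg_part_def)
  then show ?thesis unfolding V_space_def by (intro span_mono) (auto intro: le_trans)
qed

lemma main: "(\<exists>!\<Psi>. psi_conditions sm L J \<Lambda>3 \<Lambda>4 \<Psi>) \<and>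
         (\<forall>\<Psi>. psi_conditions sm L J \<Lambda>3 \<Lambda>4 \<Psi> \<longrightarrow>
            (\<forall>k. \<Psi> k \<in> V_space sm L J 1 k) \<and>
            (\<Lambda>3 = 0 \<longrightarrow> (\<forall>k. \<Psi> k \<in> V_space sm L J 2 k \<and>
                                V_space sm L J 2 k \<subseteq> V_space sm L J 1 k)))"
proof (intro conjI allI impI)
  show "\<exists>!\<Psi>. psi_conditions sm L J \<Lambda>3 \<Lambda>4 \<Psi>"
  proof (rule ex1I[of _ Psi])
    show "psi_conditions sm L J \<Lambda>3 \<Lambda>4 Psi" by (rule Psi_cond)
    fix \<Psi> assume "psi_conditions sm L J \<Lambda>3 \<Lambda>4 \<Psi>"
    then show "\<Psi> = Psi" by (intro ext cond_Psi)
  qed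
next
  fix \<Psi> k assume C: "psi_conditions sm L J \<Lambda>3 \<Lambda>4 \<Psi>"
  have e: "\<Psi> k = Psi k" by (rule cond_Psi[OF C])
  show "\<Psi> k \<in> V_space sm L J 1 k" unfolding e using subsetD[OF V_sub Psi_prop(1)] .
next
  fix \<Psi> k assume C: "psi_conditions sm L J \<Lambda>3 \<Lambda>4 \<Psi>" and z: "\<Lambda>3 = 0"
  have e: "\<Psi> k = Psi k" by (rule cond_Psi[OF C])
  show "\<Psi> k \<in> V_space sm L J 2 k" unfolding e using subsetD[OF V_sub2[OF z] Psi_prop(1)] .
  show "V_space sm L J 2 k \<subseteq> V_space sm L J 1 k" by (rule V21)
qed

end

theorem theoremA7:
  fixes smult_v :: "complex \<Rightarrow> 'v::ab_group_add \<Rightarrow> 'v"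
    and L :: "int \<Rightarrow> 'v \<Rightarrow> 'v" and J :: 'v
    and c \<Lambda>2 \<Lambda>3 \<Lambda>4 :: complex
  assumes "whittaker_module2 smult_v c L J \<Lambda>2 \<Lambda>3 \<Lambda>4"
    and "\<Lambda>4 \<noteq> 0"
  shows "(\<exists>!\<Psi>. psi_conditions smult_v L J \<Lambda>3 \<Lambda>4 \<Psi>) \<and>
         (\<forall>\<Psi>. psi_conditions smult_v L J \<Lambda>3 \<Lambda>4 \<Psi> \<longrightarrow>
            (\<forall>k. \<Psi> k \<in> V_space smult_v L J 1 k) \<and>
            (\<Lambda>3 = 0 \<longrightarrow> (\<forall>k. \<Psi> k \<in> V_space smult_v L J 2 k \<and>
                                V_space smult_v L J 2 k \<subseteq> V_space smult_v L J 1 k)))"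
proof -
  interpret WM smult_v c L J \<Lambda>2 \<Lambda>3 \<Lambda>4
    using assms by unfold_locales
  show ?thesis by (rule main)
qed

end
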